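(* (i) The variety of idempotent semirings satisfying $x+xyx\approx x$ equals $\mathbf{Rect}^{\bullet}\circ(\mathbf{LZ}^{+}\circ\mathbf{D})$. (ii) The variety of idempotent semirings satisfying $xyx+x\approx x$ equals $\mathbf{Rect}^{\bullet}\circ(\mathbf{RZ}^{+}\circ\mathbf{D})$.
   Context: An idempotent semiring is an algebra $(S,+,\cdot)$ with $(S,+)$, $(S,\cdot)$ bands and both distributive laws; addition not assumed commutative. $\mathbf{Rect}^{\bullet}$ is the variety of idempotent semirings satisfying $xyx\approx x$. $\mathbf{D}$ is the variety of distributive lattices (idempotent semirings satisfying $x+y\approx y+x$, $xy\approx yx$, $x+xy\approx x$); $\mathbf{LZ}^{+}$ (resp. $\mathbf{RZ}^{+}$) is the variety of idempotent semirings satisfying $x+y\approx x$ (resp. $x+y\approx y$). For classes $\mathbf{V},\mathbf{W}$ of idempotent semirings, the Mal'cev product $\mathbf{V}\circ\mathbf{W}$ is the class of idempotent semirings $S$ admitting a congruence $\rho$ with $S/\rho\in\mathbf{W}$ and every $\rho$-class (a subsemiring) belonging to $\mathbf{V}$. *)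

theory Defs
  imports Main
begin

record 'a salg =
  car :: "'a set"
  pl  :: "'a \<Rightarrow> 'a \<Rightarrow> 'a"
  tm  :: "'a \<Rightarrow> 'a \<Rightarrow> 'a"

definition idem_semiring :: "('a, 'b) salg_scheme \<Rightarrow> bool" where
  "idem_semiring A \<longleftrightarrow>
     (\<forall>x\<in>car A. \<forall>y\<in>car A. pl A x y \<in> car A \<and> tm A x y \<in> car A) \<and>
     (\<forall>x\<in>car A. \<forall>y\<in>car A. \<forall>z\<in>car A.
        pl A (pl A x y) z = pl A x (pl A y z) \<and>
        tm A (tm A x y) z = tm A x (tm A y z) \<and>
        tm A x (pl A y z) = pl A (tm A x y) (tm A x z) \<and>
        tm A (pl A x y) z = pl A (tm A x z) (tm A y z)) \<and>
     (\<forall>x\<in>car A. pl A x x = x \<and> tm A x x = x)"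

definition congruence :: "('a, 'b) salg_scheme \<Rightarrow> 'a rel \<Rightarrow> bool" where
  "congruence A \<rho> \<longleftrightarrow> equiv (car A) \<rho> \<and>
     (\<forall>x x' y y'. (x, x') \<in> \<rho> \<longrightarrow> (y, y') \<in> \<rho> \<longrightarrow>
        (pl A x y, pl A x' y') \<in> \<rho> \<and> (tm A x y, tm A x' y') \<in> \<rho>)"

definition quot :: "('a, 'b) salg_scheme \<Rightarrow> 'a rel \<Rightarrow> 'a set salg" where
  "quot A \<rho> = \<lparr> car = car A // \<rho>,
      pl = (\<lambda>X Y. \<rho> `` {pl A (SOME x. x \<in> X) (SOME y. y \<in> Y)}),
      tm = (\<lambda>X Y. \<rho> `` {tm A (SOME x. x \<in> X) (SOME y. y \<in> Y)}) \<rparr>"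

definition restr :: "('a, 'b) salg_scheme \<Rightarrow> 'a set \<Rightarrow> 'a salg" where
  "restr A C = \<lparr> car = C, pl = pl A, tm = tm A \<rparr>"

definition malcev :: "('a salg \<Rightarrow> bool) \<Rightarrow> ('a set salg \<Rightarrow> bool) \<Rightarrow> 'a salg \<Rightarrow> bool" where
  "malcev V W A \<longleftrightarrow> idem_semiring A \<and>
     (\<exists>\<rho>. congruence A \<rho> \<and> W (quot A \<rho>) \<and> (\<forall>C \<in> car A // \<rho>. V (restr A C)))"

definition Rect :: "'a salg \<Rightarrow> bool" where
  "Rect A \<longleftrightarrow> idem_semiring A \<and> (\<forall>x\<in>car A. \<forall>y\<in>car A. tm A (tm A x y) x = x)"

definition DLat :: "'a salg \<Rightarrow> bool" where
  "DLat A \<longleftrightarrow> idem_semiring A \<and>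
     (\<forall>x\<in>car A. \<forall>y\<in>car A. pl A x y = pl A y x \<and> tm A x y = tm A y x \<and>
        pl A x (tm A x y) = x)"

definition LZplus :: "'a salg \<Rightarrow> bool" where
  "LZplus A \<longleftrightarrow> idem_semiring A \<and> (\<forall>x\<in>car A. \<forall>y\<in>car A. pl A x y = x)"

definition RZplus :: "'a salg \<Rightarrow> bool" where
  "RZplus A \<longleftrightarrow> idem_semiring A \<and> (\<forall>x\<in>car A. \<forall>y\<in>car A. pl A x y = y)"

end

theory Submission
  imports Defs
begin


lemma cong_equiv: "congruence A \<rho> \<Longrightarrow> equiv (car A) \<rho>"
  by (simp add: congruence_def)

lemma cong_compat: "congruence A \<rho> \<Longrightarrow> (x, x') \<in> \<rho> \<Longrightarrow> (y, y') \<in> \<rho> \<Longrightarrow>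
   (pl A x y, pl A x' y') \<in> \<rho> \<and> (tm A x y, tm A x' y') \<in> \<rho>"
  by (simp add: congruence_def)

lemma some_class: assumes "equiv (car A) \<rho>" "a \<in> car A"
  shows "(a, SOME x. x \<in> \<rho>``{a}) \<in> \<rho>"
proof -
  have "a \<in> \<rho>``{a}" using assms equiv_class_self by fast
  hence "(SOME x. x \<in> \<rho>``{a}) \<in> \<rho>``{a}" by (rule someI)
  thus ?thesis by simp
qed

lemma quot_pl: assumes c: "congruence A \<rho>" and "a \<in> car A" "b \<in> car A"
  shows "pl (quot A \<rho>) (\<rho>``{a}) (\<rho>``{b}) = \<rho>``{pl A a b}"
proof -
  have e: "equiv (car A) \<rho>" using c by (rule cong_equiv)
  have "(pl A a b, pl A (SOME x. x \<in> \<rho>``{a}) (SOME x. x \<in> \<rho>``{b})) \<in> \<rho>"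
    using cong_compat[OF c some_class[OF e assms(2)] some_class[OF e assms(3)]] by blast
  hence "\<rho>``{pl A (SOME x. x \<in> \<rho>``{a}) (SOME x. x \<in> \<rho>``{b})} = \<rho>``{pl A a b}"
    using equiv_class_eq[OF e] by metis
  thus ?thesis by (simp add: quot_def)
qed

lemma quot_tm: assumes c: "congruence A \<rho>" and "a \<in> car A" "b \<in> car A"
  shows "tm (quot A \<rho>) (\<rho>``{a}) (\<rho>``{b}) = \<rho>``{tm A a b}"
proof -
  have e: "equiv (car A) \<rho>" using c by (rule cong_equiv)
  have "(tm A a b, tm A (SOME x. x \<in> \<rho>``{a}) (SOME x. x \<in> \<rho>``{b})) \<in> \<rho>"
    using cong_compat[OF c some_class[OF e assms(2)] some_class[OF e assms(3)]] by blast
  hence "\<rho>``{tm A (SOME x. x \<in> \<rho>``{a}) (SOME x. x \<in> \<rho>``{b})} = \<rho>``{tm A a b}"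
    using equiv_class_eq[OF e] by metis
  thus ?thesis by (simp add: quot_def)
qed

lemma quot_car: "car (quot A \<rho>) = car A // \<rho>"
  by (simp add: quot_def)

lemma quot_ball: "(\<forall>X\<in>car (quot A \<rho>). P X) \<longleftrightarrow> (\<forall>x\<in>car A. P (\<rho>``{x}))"
  by (auto simp: quot_car quotient_def)

lemma idem_closed: "idem_semiring A \<Longrightarrow> x \<in> car A \<Longrightarrow> y \<in> car A \<Longrightarrow> pl A x y \<in> car A \<and> tm A x y \<in> car A"
  by (simp add: idem_semiring_def)

lemma quot_idem: assumes i: "idem_semiring A" and c: "congruence A \<rho>"
  shows "idem_semiring (quot A \<rho>)"
  unfolding idem_semiring_def quot_ball
  using i idem_closed[OF i]
  by (simp add: quot_pl[OF c] quot_tm[OF c] quot_car quotientI idem_semiring_def)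

lemma restr_idem: assumes i: "idem_semiring A" and "C \<subseteq> car A"
  and "\<forall>x\<in>C. \<forall>y\<in>C. pl A x y \<in> C \<and> tm A x y \<in> C"
  shows "idem_semiring (restr A C)"
  using assms unfolding idem_semiring_def restr_def by (simp add: subset_iff)


lemma quot_class_in: "congruence A \<rho> \<Longrightarrow> x \<in> car A \<Longrightarrow> \<rho>``{x} \<in> car (quot A \<rho>)"
  by (simp add: quot_car quotientI)

lemma LZD:
  fixes Q :: "'b salg"
  assumes i: "idem_semiring Q"
    and cm: "\<forall>X\<in>car Q. \<forall>Y\<in>car Q. tm Q X Y = tm Q Y X"
    and ab: "\<forall>X\<in>car Q. \<forall>Y\<in>car Q. pl Q X (tm Q X Y) = X"
  shows "malcev LZplus DLat Q"
proof -
  let ?p = "pl Q" and ?t = "tm Q" and ?S = "car Q"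
  have cl: "\<And>x y. x \<in> ?S \<Longrightarrow> y \<in> ?S \<Longrightarrow> ?p x y \<in> ?S \<and> ?t x y \<in> ?S"
    using i by (simp add: idem_semiring_def)
  have pa: "\<And>x y z. x \<in> ?S \<Longrightarrow> y \<in> ?S \<Longrightarrow> z \<in> ?S \<Longrightarrow> ?p (?p x y) z = ?p x (?p y z)"
    and dl: "\<And>x y z. x \<in> ?S \<Longrightarrow> y \<in> ?S \<Longrightarrow> z \<in> ?S \<Longrightarrow> ?t x (?p y z) = ?p (?t x y) (?t x z)"
    and dr: "\<And>x y z. x \<in> ?S \<Longrightarrow> y \<in> ?S \<Longrightarrow> z \<in> ?S \<Longrightarrow> ?t (?p x y) z = ?p (?t x z) (?t y z)"
    and pi: "\<And>x. x \<in> ?S \<Longrightarrow> ?p x x = x" and ti: "\<And>x. x \<in> ?S \<Longrightarrow> ?t x x = x"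
    using i by (simp_all add: idem_semiring_def)
  have LR: "\<And>x y. x \<in> ?S \<Longrightarrow> y \<in> ?S \<Longrightarrow> ?p (?p x y) x = ?p x y"
  proof -
    fix x y assume xy: "x \<in> ?S" "y \<in> ?S"
    have "?t (?p x y) x = ?p x (?t y x)" using xy dr ti by simp
    also have "\<dots> = x" using xy cm ab by simp
    finally have e: "?t (?p x y) x = x" .
    have "?p x y = ?p (?p x y) (?t (?p x y) x)" using ab xy cl by simp
    thus "?p (?p x y) x = ?p x y" using e by simp
  qed
  define \<sigma> where "\<sigma> = {(X, Y). X \<in> ?S \<and> Y \<in> ?S \<and> ?p X Y = X \<and> ?p Y X = Y}"
  have eq: "equiv ?S \<sigma>"
  proof (rule equivI)
    show "\<sigma> \<subseteq> ?S \<times> ?S" by (auto simp: \<sigma>_def)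
    show "refl_on ?S \<sigma>" using pi by (auto simp: refl_on_def \<sigma>_def)
    show "sym \<sigma>" unfolding sym_def \<sigma>_def by auto
    show "trans \<sigma>"
    proof (rule transI)
      fix x y z assume a: "(x, y) \<in> \<sigma>" "(y, z) \<in> \<sigma>"
      hence m: "x \<in> ?S" "y \<in> ?S" "z \<in> ?S" "?p x y = x" "?p y x = y" "?p y z = y" "?p z y = z"
        unfolding \<sigma>_def by auto
      have "?p x z = ?p (?p x y) z" using m by simp
      also have "\<dots> = ?p x (?p y z)" using m(1-3) pa by simp
      also have "\<dots> = x" using m by simp
      finally have 1: "?p x z = x" .
      have "?p z x = ?p (?p z y) x" using m by simp
      also have "\<dots> = ?p z (?p y x)" using m(1-3) pa by simp
      also have "\<dots> = z" using m by simp
      finally have 2: "?p z x = z" .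
      show "(x, z) \<in> \<sigma>" using 1 2 m unfolding \<sigma>_def by auto
    qed
  qed
  have del: "\<And>x y x'. x \<in> ?S \<Longrightarrow> y \<in> ?S \<Longrightarrow> x' \<in> ?S \<Longrightarrow> ?p x x' = x \<Longrightarrow> ?p (?p x y) x' = ?p x y"
  proof -
    fix x y x' assume a: "x \<in> ?S" "y \<in> ?S" "x' \<in> ?S" "?p x x' = x"
    have xy: "?p x y \<in> ?S" using a cl by blast
    have "?p (?p x y) x' = ?p (?p (?p x y) x) x'" using LR[OF a(1,2)] by simp
    also have "\<dots> = ?p (?p x y) (?p x x')" using pa[OF xy a(1,3)] by simp
    also have "\<dots> = ?p x y" using a(4) LR[OF a(1,2)] by simp
    finally show "?p (?p x y) x' = ?p x y" .
  qed
  have cpl: "\<And>x x' y y'. (x, x') \<in> \<sigma> \<Longrightarrow> (y, y') \<in> \<sigma> \<Longrightarrow> (?p x y, ?p x' y') \<in> \<sigma>"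
  proof -
    fix x x' y y' assume a: "(x, x') \<in> \<sigma>" "(y, y') \<in> \<sigma>"
    hence m: "x \<in> ?S" "x' \<in> ?S" "y \<in> ?S" "y' \<in> ?S" "?p x x' = x" "?p x' x = x'" "?p y y' = y" "?p y' y = y'"
      unfolding \<sigma>_def by auto
    have "?p (?p x y) (?p x' y') = ?p (?p (?p x y) x') y'" using m cl pa by simp
    also have "\<dots> = ?p x y" using m del cl pa by simp
    finally have 1: "?p (?p x y) (?p x' y') = ?p x y" .
    have "?p (?p x' y') (?p x y) = ?p (?p (?p x' y') x) y" using m cl pa by simp
    also have "\<dots> = ?p x' y'" using m del cl pa by simp
    finally have 2: "?p (?p x' y') (?p x y) = ?p x' y'" .
    show "(?p x y, ?p x' y') \<in> \<sigma>" using 1 2 m cl unfolding \<sigma>_def by auto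
  qed
  have ctm: "\<And>x x' y y'. (x, x') \<in> \<sigma> \<Longrightarrow> (y, y') \<in> \<sigma> \<Longrightarrow> (?t x y, ?t x' y') \<in> \<sigma>"
  proof -
    fix x x' y y' assume a: "(x, x') \<in> \<sigma>" "(y, y') \<in> \<sigma>"
    hence m: "x \<in> ?S" "x' \<in> ?S" "y \<in> ?S" "y' \<in> ?S" "?p x x' = x" "?p x' x = x'" "?p y y' = y" "?p y' y = y'"
      unfolding \<sigma>_def by auto
    have "(?t x y, ?t x' y) \<in> \<sigma>" using m cl dr[of x x' y] dr[of x' x y] unfolding \<sigma>_def by auto
    moreover have "(?t x' y, ?t x' y') \<in> \<sigma>" using m cl dl[of x' y y'] dl[of x' y' y] unfolding \<sigma>_def by auto
    ultimately show "(?t x y, ?t x' y') \<in> \<sigma>" using eq by (meson equivE transD)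
  qed
  have cong: "congruence Q \<sigma>" unfolding congruence_def using eq cpl ctm by blast
  let ?Q2 = "quot Q \<sigma>"
  have i2: "idem_semiring ?Q2" by (rule quot_idem[OF i cong])
  have dlat: "DLat ?Q2"
    unfolding DLat_def quot_ball
  proof (intro conjI i2 ballI)
    fix x y assume xy: "x \<in> ?S" "y \<in> ?S"
    have sw: "\<And>x y. x \<in> ?S \<Longrightarrow> y \<in> ?S \<Longrightarrow> ?p (?p x y) (?p y x) = ?p x y"
    proof -
      fix x y assume xy: "x \<in> ?S" "y \<in> ?S"
      have "?p (?p x y) (?p y x) = ?p (?p x (?p y y)) x" using xy cl pa by simp
      also have "\<dots> = ?p x y" using xy pi LR by simp
      finally show "?p (?p x y) (?p y x) = ?p x y" .
    qed
    have "(?p x y, ?p y x) \<in> \<sigma>" unfolding \<sigma>_def using xy cl sw by simp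
    hence "\<sigma>``{?p x y} = \<sigma>``{?p y x}" using eq equiv_class_eq by metis
    thus "pl ?Q2 (\<sigma>``{x}) (\<sigma>``{y}) = pl ?Q2 (\<sigma>``{y}) (\<sigma>``{x})"
      using xy by (simp add: quot_pl[OF cong])
    show "tm ?Q2 (\<sigma>``{x}) (\<sigma>``{y}) = tm ?Q2 (\<sigma>``{y}) (\<sigma>``{x})"
      using xy cm by (simp add: quot_tm[OF cong])
    show "pl ?Q2 (\<sigma>``{x}) (tm ?Q2 (\<sigma>``{x}) (\<sigma>``{y})) = \<sigma>``{x}"
      using xy ab cl by (simp add: quot_tm[OF cong] quot_pl[OF cong])
  qed
  have lz: "LZplus (restr Q K)" if K: "K \<in> car Q // \<sigma>" for K
  proof -
    have sub: "K \<subseteq> ?S" using in_quotient_imp_subset[OF eq K] .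
    have rel: "\<And>x y. x \<in> K \<Longrightarrow> y \<in> K \<Longrightarrow> (x, y) \<in> \<sigma>"
      using in_quotient_imp_in_rel[OF eq K] by blast
    have plx: "\<And>x y. x \<in> K \<Longrightarrow> y \<in> K \<Longrightarrow> ?p x y = x" using rel unfolding \<sigma>_def by blast
    have tmK: "\<And>x y. x \<in> K \<Longrightarrow> y \<in> K \<Longrightarrow> ?t x y \<in> K"
    proof -
      fix x y assume xy: "x \<in> K" "y \<in> K"
      have "(?t x x, ?t x y) \<in> \<sigma>" using ctm[OF rel[OF xy(1) xy(1)] rel[OF xy(1) xy(2)]] .
      hence "(x, ?t x y) \<in> \<sigma>" using ti sub xy by auto
      thus "?t x y \<in> K" using in_quotient_imp_closed[OF eq K xy(1)] by blast
    qed
    have "idem_semiring (restr Q K)"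
      by (rule restr_idem[OF i sub]) (simp add: plx tmK)
    thus ?thesis unfolding LZplus_def by (simp add: restr_def plx)
  qed
  show ?thesis unfolding malcev_def using i cong dlat lz by blast
qed

lemma bwd:
  fixes A :: "'a salg"
  assumes m: "malcev Rect (malcev LZplus DLat) A"
  shows "idem_semiring A \<and> (\<forall>x\<in>car A. \<forall>y\<in>car A. pl A x (tm A (tm A x y) x) = x)"
proof -
  have i: "idem_semiring A" using m by (simp add: malcev_def)
  from m obtain \<rho> where c: "congruence A \<rho>" and W: "malcev LZplus DLat (quot A \<rho>)"
    and R: "\<forall>C \<in> car A // \<rho>. Rect (restr A C)" by (auto simp: malcev_def)
  let ?Q = "quot A \<rho>"
  from W obtain \<sigma> where c2: "congruence ?Q \<sigma>" and D: "DLat (quot ?Q \<sigma>)"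
    and L: "\<forall>K \<in> car ?Q // \<sigma>. LZplus (restr ?Q K)" by (auto simp: malcev_def)
  have e: "equiv (car A) \<rho>" using c by (rule cong_equiv)
  have e2: "equiv (car ?Q) \<sigma>" using c2 by (rule cong_equiv)
  have cl: "\<And>x y. x \<in> car A \<Longrightarrow> y \<in> car A \<Longrightarrow> pl A x y \<in> car A \<and> tm A x y \<in> car A"
    using i by (simp add: idem_semiring_def)
  have ax: "\<And>x y z. x \<in> car A \<Longrightarrow> y \<in> car A \<Longrightarrow> z \<in> car A \<Longrightarrow>
        pl A (pl A x y) z = pl A x (pl A y z) \<and>
        tm A (tm A x y) z = tm A x (tm A y z) \<and>
        tm A x (pl A y z) = pl A (tm A x y) (tm A x z) \<and>
        tm A (pl A x y) z = pl A (tm A x z) (tm A y z)"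
    and id: "\<And>x. x \<in> car A \<Longrightarrow> pl A x x = x \<and> tm A x x = x"
    using i by (simp_all add: idem_semiring_def)
  show ?thesis
  proof (intro conjI i ballI)
    fix x y assume xy: "x \<in> car A" "y \<in> car A"
    define w where "w = tm A (tm A x y) x"
    define u where "u = pl A x w"
    have yx: "tm A y x \<in> car A" using cl xy by blast
    have xy': "tm A x y \<in> car A" using cl xy by blast
    have wA: "w \<in> car A" unfolding w_def using cl xy xy' by blast
    have uA: "u \<in> car A" unfolding u_def using cl xy wA by blast
    have w2: "w = tm A x (tm A y x)" unfolding w_def using ax[OF xy(1) xy(2) xy(1)] by blast
    have uq: "\<rho>``{u} = pl ?Q (\<rho>``{x}) (tm ?Q (\<rho>``{x}) (\<rho>``{tm A y x}))"
      using xy yx wA by (simp add: u_def w2 quot_pl[OF c] quot_tm[OF c])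
    have Xq: "\<rho>``{x} \<in> car ?Q" "\<rho>``{tm A y x} \<in> car ?Q" "\<rho>``{u} \<in> car ?Q"
      using xy yx uA by (simp_all add: quot_car quotientI)
    have iQ: "idem_semiring ?Q" by (rule quot_idem[OF i c])
    have Xq2: "tm ?Q (\<rho>``{x}) (\<rho>``{tm A y x}) \<in> car ?Q" using idem_closed[OF iQ Xq(1,2)] by blast
    have "\<sigma>``{\<rho>``{u}} = pl (quot ?Q \<sigma>) (\<sigma>``{\<rho>``{x}}) (tm (quot ?Q \<sigma>) (\<sigma>``{\<rho>``{x}}) (\<sigma>``{\<rho>``{tm A y x}}))"
      using Xq Xq2 by (simp add: uq quot_pl[OF c2] quot_tm[OF c2])
    also have "\<dots> = \<sigma>``{\<rho>``{x}}"
    proof -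
      have "\<forall>X\<in>car (quot ?Q \<sigma>). \<forall>Y\<in>car (quot ?Q \<sigma>). pl (quot ?Q \<sigma>) X (tm (quot ?Q \<sigma>) X Y) = X"
        using D by (simp add: DLat_def)
      thus ?thesis using quot_class_in[OF c2 Xq(1)] quot_class_in[OF c2 Xq(2)] by blast
    qed
    finally have sx: "\<sigma>``{\<rho>``{u}} = \<sigma>``{\<rho>``{x}}" .
    have "\<rho>``{u} \<in> \<sigma>``{\<rho>``{u}}" using equiv_class_self[OF e2 Xq(3)] .
    hence m1: "\<rho>``{u} \<in> \<sigma>``{\<rho>``{x}}" using sx by simp
    have K: "\<sigma>``{\<rho>``{x}} \<in> car ?Q // \<sigma>" using Xq by (simp add: quotientI)
    have m2: "\<rho>``{x} \<in> \<sigma>``{\<rho>``{x}}" using equiv_class_self[OF e2 Xq(1)] .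
    have "LZplus (restr ?Q (\<sigma>``{\<rho>``{x}}))" using L K by blast
    hence "\<forall>a\<in>\<sigma>``{\<rho>``{x}}. \<forall>b\<in>\<sigma>``{\<rho>``{x}}. pl ?Q a b = a"
      by (simp add: LZplus_def restr_def)
    hence "pl ?Q (\<rho>``{x}) (\<rho>``{u}) = \<rho>``{x}" using m1 m2 by blast
    moreover have "pl A x u = u"
    proof -
      have "pl A x u = pl A x (pl A x w)" by (simp add: u_def)
      also have "\<dots> = pl A (pl A x x) w" using ax[OF xy(1) xy(1) wA] by simp
      also have "\<dots> = u" using id[OF xy(1)] by (simp add: u_def)
      finally show ?thesis .
    qed
    ultimately have "\<rho>``{u} = \<rho>``{x}" using xy uA by (simp add: quot_pl[OF c])
    hence xu: "(x, u) \<in> \<rho>" using eq_equiv_class_iff[OF e xy(1) uA] by simp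
    have C: "\<rho>``{x} \<in> car A // \<rho>" using xy by (simp add: quotientI)
    have "x \<in> \<rho>``{x}" using equiv_class_self[OF e xy(1)] .
    moreover have "u \<in> \<rho>``{x}" using xu by simp
    moreover have "Rect (restr A (\<rho>``{x}))" using R C by blast
    hence "\<forall>a\<in>\<rho>``{x}. \<forall>b\<in>\<rho>``{x}. tm A (tm A a b) a = a"
      by (simp add: Rect_def restr_def)
    ultimately have "tm A (tm A x u) x = x" by blast
    moreover have "tm A (tm A x u) x = u"
    proof -
      have xw: "tm A x w = w"
      proof -
        have "tm A x w = tm A (tm A x (tm A x y)) x" using ax[OF xy(1) xy' xy(1)] by (simp add: w_def)
        also have "tm A x (tm A x y) = tm A x y" using ax[OF xy(1) xy(1) xy(2)] id[OF xy(1)] by simp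
        finally show ?thesis by (simp add: w_def)
      qed
      have wx: "tm A w x = w"
        using ax[OF xy' xy(1) xy(1)] id[OF xy(1)] by (simp add: w_def)
      have "tm A x u = pl A (tm A x x) (tm A x w)" using ax[OF xy(1) xy(1) wA] by (simp add: u_def)
      also have "\<dots> = u" using xw id[OF xy(1)] by (simp add: u_def)
      finally have "tm A x u = u" .
      hence "tm A (tm A x u) x = tm A u x" by simp
      also have "\<dots> = pl A (tm A x x) (tm A w x)" using ax[OF xy(1) wA xy(1)] by (simp add: u_def)
      also have "\<dots> = u" using wx id[OF xy(1)] by (simp add: u_def)
      finally show ?thesis .
    qed
    ultimately show "pl A x (tm A (tm A x y) x) = x" using u_def w_def by simp
  qed
qed


definition flip :: "'b salg \<Rightarrow> 'b salg" where
  "flip A = \<lparr>car = car A, pl = (\<lambda>x y. pl A y x), tm = tm A\<rparr>"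

lemma flip_simps[simp]: "car (flip A) = car A" "pl (flip A) x y = pl A y x" "tm (flip A) = tm A"
  by (simp_all add: flip_def)

lemma flip_flip[simp]: "flip (flip A) = A"
  by (simp add: flip_def)

lemma flip_idem1: assumes i: "idem_semiring A" shows "idem_semiring (flip A)"
proof -
  have cl: "\<And>x y. x \<in> car A \<Longrightarrow> y \<in> car A \<Longrightarrow> pl A x y \<in> car A"
    "\<And>x y. x \<in> car A \<Longrightarrow> y \<in> car A \<Longrightarrow> tm A x y \<in> car A"
    using i by (simp_all add: idem_semiring_def)
  have ax: "\<And>x y z. x \<in> car A \<Longrightarrow> y \<in> car A \<Longrightarrow> z \<in> car A \<Longrightarrow> pl A (pl A x y) z = pl A x (pl A y z)"
    "\<And>x y z. x \<in> car A \<Longrightarrow> y \<in> car A \<Longrightarrow> z \<in> car A \<Longrightarrow> tm A (tm A x y) z = tm A x (tm A y z)"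
    "\<And>x y z. x \<in> car A \<Longrightarrow> y \<in> car A \<Longrightarrow> z \<in> car A \<Longrightarrow> tm A x (pl A y z) = pl A (tm A x y) (tm A x z)"
    "\<And>x y z. x \<in> car A \<Longrightarrow> y \<in> car A \<Longrightarrow> z \<in> car A \<Longrightarrow> tm A (pl A x y) z = pl A (tm A x z) (tm A y z)"
    "\<And>x. x \<in> car A \<Longrightarrow> pl A x x = x" "\<And>x. x \<in> car A \<Longrightarrow> tm A x x = x"
    using i by (simp_all add: idem_semiring_def)
  show ?thesis unfolding idem_semiring_def flip_simps by (auto simp: cl ax)
qed

lemma flip_idem[simp]: "idem_semiring (flip A) \<longleftrightarrow> idem_semiring A"
  using flip_idem1[of A] flip_idem1[of "flip A"] by auto

lemma flip_cong[simp]: "congruence (flip A) \<rho> \<longleftrightarrow> congruence A \<rho>"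
  unfolding congruence_def by auto

lemma quot_flip[simp]: "quot (flip A) \<rho> = flip (quot A \<rho>)"
  by (simp add: quot_def flip_def)

lemma restr_flip[simp]: "restr (flip A) C = flip (restr A C)"
  by (simp add: restr_def flip_def)

lemma Rect_flip[simp]: "Rect (flip A) \<longleftrightarrow> Rect A"
  by (simp add: Rect_def)

lemma LZ_flip[simp]: "LZplus (flip A) \<longleftrightarrow> RZplus A"
  by (auto simp: LZplus_def RZplus_def)

lemma DLat_flip1: assumes "DLat A" shows "DLat (flip A)"
proof -
  have i: "idem_semiring A" using assms by (simp add: DLat_def)
  have d: "\<forall>x\<in>car A. \<forall>y\<in>car A. pl A x y = pl A y x \<and> tm A x y = tm A y x \<and> pl A x (tm A x y) = x"
    using assms by (simp add: DLat_def)
  show ?thesis unfolding DLat_def flip_simps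
  proof (intro conjI ballI)
    show "idem_semiring (flip A)" using i by simp
    fix x y assume a: "x \<in> car A" "y \<in> car A"
    have t: "tm A x y \<in> car A" using idem_closed[OF i a] by blast
    show "pl A y x = pl A x y" using d a by auto
    show "tm A x y = tm A y x" using d a by auto
    show "pl A (tm A x y) x = x" using d a t by metis
  qed
qed

lemma DLat_flip[simp]: "DLat (flip A) \<longleftrightarrow> DLat A"
  using DLat_flip1[of A] DLat_flip1[of "flip A"] by auto

lemma malcev_flip: "malcev V W (flip A) \<longleftrightarrow> malcev (\<lambda>B. V (flip B)) (\<lambda>B. W (flip B)) A"
  unfolding malcev_def by simp

lemma malcev_flip_main:
  fixes A :: "'a salg"
  shows "malcev Rect (malcev LZplus DLat) (flip A) \<longleftrightarrow> malcev Rect (malcev RZplus DLat) A"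
proof -
  have 1: "(\<lambda>B::'a set salg. malcev LZplus DLat (flip B)) = malcev RZplus DLat"
    by (rule ext) (simp add: malcev_flip)
  show ?thesis by (simp add: malcev_flip 1)
qed


locale rsr = fixes S :: "'a set" and p :: "'a \<Rightarrow> 'a \<Rightarrow> 'a" and t :: "'a \<Rightarrow> 'a \<Rightarrow> 'a"
  assumes cp: "x \<in> S \<Longrightarrow> y \<in> S \<Longrightarrow> p x y \<in> S"
  and ct: "x \<in> S \<Longrightarrow> y \<in> S \<Longrightarrow> t x y \<in> S"
  and pa: "x \<in> S \<Longrightarrow> y \<in> S \<Longrightarrow> z \<in> S \<Longrightarrow> p (p x y) z = p x (p y z)"
  and ta: "x \<in> S \<Longrightarrow> y \<in> S \<Longrightarrow> z \<in> S \<Longrightarrow> t (t x y) z = t x (t y z)"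
  and dl: "x \<in> S \<Longrightarrow> y \<in> S \<Longrightarrow> z \<in> S \<Longrightarrow> t x (p y z) = p (t x y) (t x z)"
  and dr: "x \<in> S \<Longrightarrow> y \<in> S \<Longrightarrow> z \<in> S \<Longrightarrow> t (p x y) z = p (t x z) (t y z)"
  and pi: "x \<in> S \<Longrightarrow> p x x = x"
  and ti: "x \<in> S \<Longrightarrow> t x x = x"
  and ab: "x \<in> S \<Longrightarrow> y \<in> S \<Longrightarrow> p x (t (t x y) x) = x"
begin
lemmas base = pa ta dl dr pi ti ab

lemma L: assumes "a \<in> S" "b \<in> S" "c \<in> S" and h: "t (t a b) a = a"
  shows "p a (t (t c b) a) = p a (t c a)"
proof (rule ccontr)
  assume neg: "\<not> ?thesis"
  note abc = assms(1-3)
  have s21: "\<And>X0 X1. X0 \<in> S \<Longrightarrow> X1 \<in> S \<Longrightarrow> (p X0 (t X0 (t X1 X0))) = X0" by (metis ab ta cp ct abc)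
  have s22: "(p a (t c a)) \<noteq> (p a (t c (t b a)))" by (metis neg ta cp ct abc)
  have s27: "\<And>X0 X1. X0 \<in> S \<Longrightarrow> X1 \<in> S \<Longrightarrow> (p X0 X1) = (p X0 (p X0 X1))" by (metis pa pi cp ct abc)
  have s28: "\<And>X2 X3 X4. X2 \<in> S \<Longrightarrow> X3 \<in> S \<Longrightarrow> X4 \<in> S \<Longrightarrow> (p X2 (p (t X2 (t X3 X2)) X4)) = (p X2 X4)" by (metis pa s21 cp ct abc)
  have s30: "\<And>X3 X4. X3 \<in> S \<Longrightarrow> X4 \<in> S \<Longrightarrow> (p X3 X4) = (p X3 (p X4 (p X3 X4)))" by (metis pa pi cp ct abc)
  have s36: "\<And>X0 X1. X0 \<in> S \<Longrightarrow> X1 \<in> S \<Longrightarrow> (t X0 X1) = (t X0 (t X0 X1))" by (metis ta ti cp ct abc)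
  have s39: "a = (t a (t b a))" by (metis ta h cp ct abc)
  have s40: "\<And>X3 X4. X3 \<in> S \<Longrightarrow> X4 \<in> S \<Longrightarrow> (t X3 X4) = (t X3 (t X4 (t X3 X4)))" by (metis ta ti cp ct abc)
  have s43: "\<And>X2 X3 X4. X2 \<in> S \<Longrightarrow> X3 \<in> S \<Longrightarrow> X4 \<in> S \<Longrightarrow> (p X4 (t X4 (t X2 (t X3 X4)))) = X4" by (metis s21 ta cp ct abc)
  have s63: "\<And>X0 X1. X0 \<in> S \<Longrightarrow> X1 \<in> S \<Longrightarrow> (t X0 (p X0 X1)) = (p X0 (t X0 X1))" by (metis dl ti cp ct abc)
  have s73: "\<And>X2 X3 X4. X2 \<in> S \<Longrightarrow> X3 \<in> S \<Longrightarrow> X4 \<in> S \<Longrightarrow> (t X2 (p X3 X4)) = (p (t X2 X3) (t X2 (p X3 X4)))" by (metis s27 dl cp ct abc)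
  have s74: "\<And>X5 X6 X7 X8. X5 \<in> S \<Longrightarrow> X6 \<in> S \<Longrightarrow> X7 \<in> S \<Longrightarrow> X8 \<in> S \<Longrightarrow> (p (t X5 X6) (p (t X5 X7) X8)) = (p (t X5 (p X6 X7)) X8)" by (metis pa dl cp ct abc)
  have s88: "\<And>X1 X2 X3. X1 \<in> S \<Longrightarrow> X2 \<in> S \<Longrightarrow> X3 \<in> S \<Longrightarrow> (t X1 (p X3 (t X1 X2))) = (p (t X1 X3) (t X1 X2))" by (metis dl s36 cp ct abc)
  have s89: "\<And>X4 X5 X6. X4 \<in> S \<Longrightarrow> X5 \<in> S \<Longrightarrow> X6 \<in> S \<Longrightarrow> (p (t X4 X5) (t X4 X6)) = (t X4 (p (t X4 X5) X6))" by (metis dl s36 cp ct abc)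
  have s95: "\<And>X1 X2 X3. X1 \<in> S \<Longrightarrow> X2 \<in> S \<Longrightarrow> X3 \<in> S \<Longrightarrow> (t X1 (p X3 (t X1 X2))) = (t X1 (p X3 X2))" by (metis s88 dl cp ct abc)
  have s96: "\<And>X4 X5 X6. X4 \<in> S \<Longrightarrow> X5 \<in> S \<Longrightarrow> X6 \<in> S \<Longrightarrow> (t X4 (p X5 X6)) = (t X4 (p (t X4 X5) X6))" by (metis s89 dl cp ct abc)
  have s101: "\<And>X0 X1. X0 \<in> S \<Longrightarrow> X1 \<in> S \<Longrightarrow> (t (p X0 X1) X0) = (p X0 (t X1 X0))" by (metis dr ti cp ct abc)
  have s102: "\<And>X2 X3 X4. X2 \<in> S \<Longrightarrow> X3 \<in> S \<Longrightarrow> X4 \<in> S \<Longrightarrow> (t (p X2 X4) (t X2 X3)) = (p (t X2 X3) (t X4 (t X2 X3)))" by (metis dr s36 cp ct abc)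
  have s103: "\<And>X5. X5 \<in> S \<Longrightarrow> (t (p (t a b) X5) a) = (p a (t X5 a))" by (metis dr h cp ct abc)
  have s104: "\<And>X6 X7 X8 X9. X6 \<in> S \<Longrightarrow> X7 \<in> S \<Longrightarrow> X8 \<in> S \<Longrightarrow> X9 \<in> S \<Longrightarrow> (t (p (t X6 X7) X9) X8) = (p (t X6 (t X7 X8)) (t X9 X8))" by (metis dr ta cp ct abc)
  have s105: "\<And>X10. X10 \<in> S \<Longrightarrow> (t (p a X10) (t b a)) = (p a (t X10 (t b a)))" by (metis dr s39 cp ct abc)
  have s109: "\<And>X6 X7 X8 X9. X6 \<in> S \<Longrightarrow> X7 \<in> S \<Longrightarrow> X8 \<in> S \<Longrightarrow> X9 \<in> S \<Longrightarrow> (t (p X9 (t X6 X7)) X8) = (p (t X9 X8) (t X6 (t X7 X8)))" by (metis dr ta cp ct abc)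
  have s115: "\<And>X4 X5 X6. X4 \<in> S \<Longrightarrow> X5 \<in> S \<Longrightarrow> X6 \<in> S \<Longrightarrow> (t (p X4 X6) X5) = (p (t X4 X5) (t (p X4 X6) X5))" by (metis s27 dr cp ct abc)
  have s116: "\<And>X7 X8 X9 X10. X7 \<in> S \<Longrightarrow> X8 \<in> S \<Longrightarrow> X9 \<in> S \<Longrightarrow> X10 \<in> S \<Longrightarrow> (p (t X7 X8) (p (t X9 X8) X10)) = (p (t (p X7 X9) X8) X10)" by (metis pa dr cp ct abc)
  have s249: "\<And>X8 X9. X8 \<in> S \<Longrightarrow> X9 \<in> S \<Longrightarrow> (p X8 (t X8 (p X9 (p X8 X9)))) = (t X8 (p X8 X9))" by (metis s63 s30 cp ct abc)
  have s254: "\<And>X0 X1 X2. X0 \<in> S \<Longrightarrow> X1 \<in> S \<Longrightarrow> X2 \<in> S \<Longrightarrow> (t X0 (t (p X0 X1) X2)) = (t (p X0 (t X0 X1)) X2)" by (metis ta s63 cp ct abc)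
  have s258: "\<And>X12 X13 X14. X12 \<in> S \<Longrightarrow> X13 \<in> S \<Longrightarrow> X14 \<in> S \<Longrightarrow> (t (p X12 X14) (p X12 X13)) = (p (p X12 (t X12 X13)) (t X14 (p X12 X13)))" by (metis dr s63 cp ct abc)
  have s260: "\<And>X17 X18. X17 \<in> S \<Longrightarrow> X18 \<in> S \<Longrightarrow> (p X17 (t X17 X18)) = (t X17 (p X17 (t X17 X18)))" by (metis s36 s63 cp ct abc)
  have s269: "\<And>X8 X9. X8 \<in> S \<Longrightarrow> X9 \<in> S \<Longrightarrow> (p X8 (t X8 (p X9 (p X8 X9)))) = (p X8 (t X8 X9))" by (metis s249 s63 cp ct abc)
  have s332: "\<And>X8 X9. X8 \<in> S \<Longrightarrow> X9 \<in> S \<Longrightarrow> (p X8 (t (p X9 (p X8 X9)) X8)) = (t (p X8 X9) X8)" by (metis s101 s30 cp ct abc)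
  have s333: "\<And>X10 X11 X12. X10 \<in> S \<Longrightarrow> X11 \<in> S \<Longrightarrow> X12 \<in> S \<Longrightarrow> (p (p X10 X11) (t X12 (p X10 X11))) = (t (p X10 (p X11 X12)) (p X10 X11))" by (metis s101 pa cp ct abc)
  have s334: "\<And>X13 X14 X15. X13 \<in> S \<Longrightarrow> X14 \<in> S \<Longrightarrow> X15 \<in> S \<Longrightarrow> (p (t X13 X14) (t (t X13 X15) (t X13 X14))) = (t (t X13 (p X14 X15)) (t X13 X14))" by (metis s101 dl cp ct abc)
  have s336: "\<And>X0 X1 X2. X0 \<in> S \<Longrightarrow> X1 \<in> S \<Longrightarrow> X2 \<in> S \<Longrightarrow> (t (p X0 X1) (t X0 X2)) = (t (p X0 (t X1 X0)) X2)" by (metis ta s101 cp ct abc)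
  have s342: "\<And>X17 X18. X17 \<in> S \<Longrightarrow> X18 \<in> S \<Longrightarrow> (p X17 (t X18 X17)) = (t (p X17 X18) (p X17 (t X18 X17)))" by (metis s36 s101 cp ct abc)
  have s352: "\<And>X8 X9. X8 \<in> S \<Longrightarrow> X9 \<in> S \<Longrightarrow> (p X8 (t (p X9 (p X8 X9)) X8)) = (p X8 (t X9 X8))" by (metis s332 s101 cp ct abc)
  have s353: "\<And>X10 X11 X12. X10 \<in> S \<Longrightarrow> X11 \<in> S \<Longrightarrow> X12 \<in> S \<Longrightarrow> (t (p X10 (p X11 X12)) (p X10 X11)) = (p X10 (p X11 (t X12 (p X10 X11))))" by (metis s333 pa cp ct abc)
  have s354: "\<And>X13 X14 X15. X13 \<in> S \<Longrightarrow> X14 \<in> S \<Longrightarrow> X15 \<in> S \<Longrightarrow> (p (t X13 X14) (t (t X13 X15) (t X13 X14))) = (t X13 (t (p X14 X15) (t X13 X14)))" by (metis s334 ta cp ct abc)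
  have s355: "\<And>X13 X14 X15. X13 \<in> S \<Longrightarrow> X14 \<in> S \<Longrightarrow> X15 \<in> S \<Longrightarrow> (t X13 (t (p X14 X15) (t X13 X14))) = (p (t X13 X14) (t X13 (t X15 (t X13 X14))))" by (metis s354 ta cp ct abc)
  have s356: "\<And>X13 X14 X15. X13 \<in> S \<Longrightarrow> X14 \<in> S \<Longrightarrow> X15 \<in> S \<Longrightarrow> (t X13 (t (p X14 X15) (t X13 X14))) = (t X13 (p X14 (t X15 (t X13 X14))))" by (metis s355 dl cp ct abc)
  have s440: "\<And>X0. X0 \<in> S \<Longrightarrow> (p a (t (t a X0) a)) = (t (t a (p b X0)) a)" by (metis s103 dl cp ct abc)
  have s441: "\<And>X1. X1 \<in> S \<Longrightarrow> (p a (t (t X1 b) a)) = (t (t (p a X1) b) a)" by (metis s103 dr cp ct abc)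
  have s450: "\<And>X2 X3. X2 \<in> S \<Longrightarrow> X3 \<in> S \<Longrightarrow> (t (p (t a b) X2) (p a X3)) = (p (p a (t X2 a)) (t (p (t a b) X2) X3))" by (metis dl s103 cp ct abc)
  have s455: "\<And>X11. X11 \<in> S \<Longrightarrow> (p a (t X11 a)) = (t (p (t a b) X11) (p a (t X11 a)))" by (metis s36 s103 cp ct abc)
  have s458: "\<And>X0. X0 \<in> S \<Longrightarrow> (t (t a (p b X0)) a) = (p a (t a (t X0 a)))" by (metis s440 ta cp ct abc)
  have s459: "\<And>X0. X0 \<in> S \<Longrightarrow> a = (t (t a (p b X0)) a)" by (metis s458 s21 cp ct abc)
  have s460: "\<And>X1. X1 \<in> S \<Longrightarrow> (t (t (p a X1) b) a) = (p a (t X1 (t b a)))" by (metis s441 ta cp ct abc)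
  have s501: "\<And>X9 X10. X9 \<in> S \<Longrightarrow> X10 \<in> S \<Longrightarrow> (p a (t X10 a)) = (t (p (t a (p b X9)) X10) a)" by (metis dr s459 cp ct abc)
  have s591: "\<And>X3 X4 X5. X3 \<in> S \<Longrightarrow> X4 \<in> S \<Longrightarrow> X5 \<in> S \<Longrightarrow> (p X3 (t X5 (t X4 X3))) = (p X3 (t (p X3 X5) (t X4 X3)))" by (metis s28 dr cp ct abc)
  have s1304: "\<And>X47 X48 X49 X50. X47 \<in> S \<Longrightarrow> X48 \<in> S \<Longrightarrow> X49 \<in> S \<Longrightarrow> X50 \<in> S \<Longrightarrow> (p (t X47 X48) (t (p (t X47 X49) X50) (t X47 X48))) = (t (p (t X47 (p X48 X49)) X50) (t X47 X48))" by (metis s101 s74 cp ct abc)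
  have s1441: "\<And>X0 X1. X0 \<in> S \<Longrightarrow> X1 \<in> S \<Longrightarrow> (t X0 X0) = (t X0 (p X0 (t X1 X0)))" by (metis s95 s21 cp ct abc)
  have s1454: "\<And>X5 X6 X7 X8. X5 \<in> S \<Longrightarrow> X6 \<in> S \<Longrightarrow> X7 \<in> S \<Longrightarrow> X8 \<in> S \<Longrightarrow> (t X5 (t (p X6 (t X5 X7)) X8)) = (t (t X5 (p X6 X7)) X8)" by (metis ta s95 cp ct abc)
  have s1488: "\<And>X0 X1. X0 \<in> S \<Longrightarrow> X1 \<in> S \<Longrightarrow> (t X0 (p X0 (t X1 X0))) = X0" by (metis s1441 ti cp ct abc)
  have s1501: "\<And>X5 X6 X7 X8. X5 \<in> S \<Longrightarrow> X6 \<in> S \<Longrightarrow> X7 \<in> S \<Longrightarrow> X8 \<in> S \<Longrightarrow> (t X5 (t (p X6 (t X5 X7)) X8)) = (t X5 (t (p X6 X7) X8))" by (metis s1454 ta cp ct abc)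
  have s1517: "\<And>X0 X1 X2. X0 \<in> S \<Longrightarrow> X1 \<in> S \<Longrightarrow> X2 \<in> S \<Longrightarrow> (t (p (t X1 X0) X2) X0) = (p (t X1 X0) (t X2 X0))" by (metis s104 ti cp ct abc)
  have s1575: "\<And>X3 X4 X5. X3 \<in> S \<Longrightarrow> X4 \<in> S \<Longrightarrow> X5 \<in> S \<Longrightarrow> (p X3 (t X5 X3)) = (p X3 (t (p (t X3 X4) X5) X3))" by (metis s28 s104 cp ct abc)
  have s1588: "\<And>X0 X1 X2. X0 \<in> S \<Longrightarrow> X1 \<in> S \<Longrightarrow> X2 \<in> S \<Longrightarrow> (t (p (t X1 X0) X2) X0) = (t (p X1 X2) X0)" by (metis s1517 dr cp ct abc)
  have s1669: "\<And>X5 X6 X7. X5 \<in> S \<Longrightarrow> X6 \<in> S \<Longrightarrow> X7 \<in> S \<Longrightarrow> (t X5 X7) = (t X5 (t (p X5 (t X6 X5)) X7))" by (metis ta s1488 cp ct abc)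
  have s1673: "\<And>X17 X18 X19. X17 \<in> S \<Longrightarrow> X18 \<in> S \<Longrightarrow> X19 \<in> S \<Longrightarrow> (t (p X17 X19) (p X17 (t X18 X17))) = (p X17 (t X19 (p X17 (t X18 X17))))" by (metis dr s1488 cp ct abc)
  have s1722: "\<And>X5 X6 X7. X5 \<in> S \<Longrightarrow> X6 \<in> S \<Longrightarrow> X7 \<in> S \<Longrightarrow> (t X5 X7) = (t X5 (t (p X5 X6) (t X5 X7)))" by (metis s1669 s336 cp ct abc)
  have s1746: "\<And>X0 X1 X2. X0 \<in> S \<Longrightarrow> X1 \<in> S \<Longrightarrow> X2 \<in> S \<Longrightarrow> (t (p X0 (t X1 X2)) X0) = (p X0 (t X1 (t X2 X0)))" by (metis s109 ti cp ct abc)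
  have s1753: "\<And>X28 X29 X30 X31. X28 \<in> S \<Longrightarrow> X29 \<in> S \<Longrightarrow> X30 \<in> S \<Longrightarrow> X31 \<in> S \<Longrightarrow> (t (p (p X28 X29) (t X30 X31)) X28) = (p (p X28 (t X29 X28)) (t X30 (t X31 X28)))" by (metis s109 s101 cp ct abc)
  have s1772: "\<And>X7 X8 X9 X10. X7 \<in> S \<Longrightarrow> X8 \<in> S \<Longrightarrow> X9 \<in> S \<Longrightarrow> X10 \<in> S \<Longrightarrow> (t (p X9 (t X10 X7)) (t X8 (t X7 X8))) = (p (t X9 (t X8 (t X7 X8))) (t X10 (t X7 X8)))" by (metis s109 s40 cp ct abc)
  have s1777: "\<And>X28 X29 X30 X31. X28 \<in> S \<Longrightarrow> X29 \<in> S \<Longrightarrow> X30 \<in> S \<Longrightarrow> X31 \<in> S \<Longrightarrow> (t (p X30 (t X31 (p X28 X29))) X28) = (p (t X30 X28) (t X31 (p X28 (t X29 X28))))" by (metis s109 s101 cp ct abc)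
  have s1780: "\<And>X39 X40 X41. X39 \<in> S \<Longrightarrow> X40 \<in> S \<Longrightarrow> X41 \<in> S \<Longrightarrow> (t (p X40 (t X41 (p (t a b) X39))) a) = (p (t X40 a) (t X41 (p a (t X39 a))))" by (metis s109 s103 cp ct abc)
  have s1808: "\<And>X7 X8 X9 X10. X7 \<in> S \<Longrightarrow> X8 \<in> S \<Longrightarrow> X9 \<in> S \<Longrightarrow> X10 \<in> S \<Longrightarrow> (p X7 (t X9 (t X10 (t X8 X7)))) = (p X7 (t (p X7 (t X9 X10)) (t X8 X7)))" by (metis s28 s109 cp ct abc)
  have s1821: "\<And>X28 X29 X30 X31. X28 \<in> S \<Longrightarrow> X29 \<in> S \<Longrightarrow> X30 \<in> S \<Longrightarrow> X31 \<in> S \<Longrightarrow> (p (p X28 (t X29 X28)) (t X30 (t X31 X28))) = (t (p X28 (p X29 (t X30 X31))) X28)" by (metis s1753 pa cp ct abc)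
  have s1822: "\<And>X28 X29 X30 X31. X28 \<in> S \<Longrightarrow> X29 \<in> S \<Longrightarrow> X30 \<in> S \<Longrightarrow> X31 \<in> S \<Longrightarrow> (p (p X28 (t X29 X28)) (t X30 (t X31 X28))) = (p X28 (t (p X29 (t X30 X31)) X28))" by (metis s1821 s101 cp ct abc)
  have s1834: "\<And>X7 X8 X9 X10. X7 \<in> S \<Longrightarrow> X8 \<in> S \<Longrightarrow> X9 \<in> S \<Longrightarrow> X10 \<in> S \<Longrightarrow> (t (p X9 (t X10 X7)) (t X8 (t X7 X8))) = (t (p (t X9 X8) X10) (t X7 X8))" by (metis s1772 s104 cp ct abc)
  have s1839: "\<And>X39 X40 X41. X39 \<in> S \<Longrightarrow> X40 \<in> S \<Longrightarrow> X41 \<in> S \<Longrightarrow> (t (p X40 (t X41 (p (t a b) X39))) a) = (t (p X40 (t X41 (p a X39))) a)" by (metis s1780 s1777 cp ct abc)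
  have s2057: "\<And>X32 X33 X34. X32 \<in> S \<Longrightarrow> X33 \<in> S \<Longrightarrow> X34 \<in> S \<Longrightarrow> (p (t (p X34 X32) X33) (t X32 X33)) = (p (t X34 X33) (t X32 X33))" by (metis s116 pi cp ct abc)
  have s2070: "\<And>X3 X4. X3 \<in> S \<Longrightarrow> X4 \<in> S \<Longrightarrow> (p a (t (p (t X3 b) X4) a)) = (t (p (t (p a X3) b) X4) a)" by (metis s103 s116 cp ct abc)
  have s2145: "\<And>X32 X33 X34. X32 \<in> S \<Longrightarrow> X33 \<in> S \<Longrightarrow> X34 \<in> S \<Longrightarrow> (t (p X34 X32) X33) = (p (t (p X34 X32) X33) (t X32 X33))" by (metis s2057 dr cp ct abc)
  have s2836: "\<And>X6 X7 X8. X6 \<in> S \<Longrightarrow> X7 \<in> S \<Longrightarrow> X8 \<in> S \<Longrightarrow> (t X6 (p X7 (t X8 X7))) = (t X6 (t (p X6 X8) X7))" by (metis s96 dr cp ct abc)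
  have s3610: "\<And>X14 X15 X16. X14 \<in> S \<Longrightarrow> X15 \<in> S \<Longrightarrow> X16 \<in> S \<Longrightarrow> (t (p X14 (t (t X14 X15) X16)) X15) = (t (t X14 X15) (t (p X14 (t (t X14 X15) X16)) X15))" by (metis s260 s109 cp ct abc)
  have s3681: "\<And>X14 X15 X16. X14 \<in> S \<Longrightarrow> X15 \<in> S \<Longrightarrow> X16 \<in> S \<Longrightarrow> (t (p X14 (t (t X14 X15) X16)) X15) = (t (t X14 X15) (t (p X14 X16) X15))" by (metis s3610 s1501 cp ct abc)
  have s3682: "\<And>X14 X15 X16. X14 \<in> S \<Longrightarrow> X15 \<in> S \<Longrightarrow> X16 \<in> S \<Longrightarrow> (t (p X14 (t (t X14 X15) X16)) X15) = (t X14 (t X15 (t (p X14 X16) X15)))" by (metis s3681 ta cp ct abc)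
  have s3683: "\<And>X14 X15 X16. X14 \<in> S \<Longrightarrow> X15 \<in> S \<Longrightarrow> X16 \<in> S \<Longrightarrow> (t X14 (t X15 (t (p X14 X16) X15))) = (t (p X14 (t X14 (t X15 X16))) X15)" by (metis s3682 ta cp ct abc)
  have s6904: "\<And>X43 X44 X45. X43 \<in> S \<Longrightarrow> X44 \<in> S \<Longrightarrow> X45 \<in> S \<Longrightarrow> (t (p X44 (t X45 (t (p a X43) b))) a) = (p (t X44 a) (t X45 (p a (t X43 (t b a)))))" by (metis s109 s460 cp ct abc)
  have s10074: "\<And>X15 X16 X17. X15 \<in> S \<Longrightarrow> X16 \<in> S \<Longrightarrow> X17 \<in> S \<Longrightarrow> (t X15 (p X16 (t X15 (p X16 X17)))) = (t X15 (t X15 (p X16 X17)))" by (metis s96 s73 cp ct abc)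
  have s10191: "\<And>X15 X16 X17. X15 \<in> S \<Longrightarrow> X16 \<in> S \<Longrightarrow> X17 \<in> S \<Longrightarrow> (t X15 (p X16 X17)) = (t X15 (p X16 (t X15 (p X16 X17))))" by (metis s10074 s36 cp ct abc)
  have s11292: "\<And>X60 X61 X62. X60 \<in> S \<Longrightarrow> X61 \<in> S \<Longrightarrow> X62 \<in> S \<Longrightarrow> (t (t X60 X61) (t (p X60 X62) X61)) = (p (t X60 X61) (t (t X60 X61) (t (p X60 X62) X61)))" by (metis s63 s115 cp ct abc)
  have s11407: "\<And>X60 X61 X62. X60 \<in> S \<Longrightarrow> X61 \<in> S \<Longrightarrow> X62 \<in> S \<Longrightarrow> (t X60 (t X61 (t (p X60 X62) X61))) = (p (t X60 X61) (t X60 (t X61 (t (p X60 X62) X61))))" by (metis s11292 ta cp ct abc)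
  have s13601: "\<And>X66 X67 X68. X66 \<in> S \<Longrightarrow> X67 \<in> S \<Longrightarrow> X68 \<in> S \<Longrightarrow> (p (t X66 X67) (t (t X66 X67) (t (p X66 X68) X67))) = (p (t X66 X67) (t (t X66 X67) (p (t (p X66 X68) X67) (t (p X66 X68) X67))))" by (metis s269 s115 cp ct abc)
  have s13767: "\<And>X66 X67 X68. X66 \<in> S \<Longrightarrow> X67 \<in> S \<Longrightarrow> X68 \<in> S \<Longrightarrow> (p (t X66 X67) (t (t X66 X67) (t (p X66 X68) X67))) = (p (t X66 X67) (t X66 (t X67 (p (t (p X66 X68) X67) (t (p X66 X68) X67)))))" by (metis s13601 ta cp ct abc)
  have s13768: "\<And>X66 X67 X68. X66 \<in> S \<Longrightarrow> X67 \<in> S \<Longrightarrow> X68 \<in> S \<Longrightarrow> (p (t X66 X67) (t (t X66 X67) (t (p X66 X68) X67))) = (p (t X66 X67) (t X66 (t X67 (t (p X66 X68) (p X67 X67)))))" by (metis s13767 dl cp ct abc)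
  have s13769: "\<And>X66 X67 X68. X66 \<in> S \<Longrightarrow> X67 \<in> S \<Longrightarrow> X68 \<in> S \<Longrightarrow> (p (t X66 X67) (t (t X66 X67) (t (p X66 X68) X67))) = (p (t X66 X67) (t X66 (t X67 (t (p X66 X68) X67))))" by (metis s13768 pi cp ct abc)
  have s13770: "\<And>X66 X67 X68. X66 \<in> S \<Longrightarrow> X67 \<in> S \<Longrightarrow> X68 \<in> S \<Longrightarrow> (p (t X66 X67) (t (t X66 X67) (t (p X66 X68) X67))) = (t X66 (p X67 (t X67 (t (p X66 X68) X67))))" by (metis s13769 dl cp ct abc)
  have s13771: "\<And>X66 X67 X68. X66 \<in> S \<Longrightarrow> X67 \<in> S \<Longrightarrow> X68 \<in> S \<Longrightarrow> (t X66 X67) = (p (t X66 X67) (t (t X66 X67) (t (p X66 X68) X67)))" by (metis s13770 s21 cp ct abc)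
  have s13772: "\<And>X66 X67 X68. X66 \<in> S \<Longrightarrow> X67 \<in> S \<Longrightarrow> X68 \<in> S \<Longrightarrow> (t X66 X67) = (p (t X66 X67) (t X66 (t X67 (t (p X66 X68) X67))))" by (metis s13771 ta cp ct abc)
  have s13773: "\<And>X60 X61 X62. X60 \<in> S \<Longrightarrow> X61 \<in> S \<Longrightarrow> X62 \<in> S \<Longrightarrow> (t X60 X61) = (t X60 (t X61 (t (p X60 X62) X61)))" by (metis s11407 s13772 cp ct abc)
  have s13775: "\<And>X14 X15 X16. X14 \<in> S \<Longrightarrow> X15 \<in> S \<Longrightarrow> X16 \<in> S \<Longrightarrow> (t X14 X15) = (t (p X14 (t X14 (t X15 X16))) X15)" by (metis s3683 s13773 cp ct abc)
  have s14561: "\<And>X12 X13 X14. X12 \<in> S \<Longrightarrow> X13 \<in> S \<Longrightarrow> X14 \<in> S \<Longrightarrow> (t (t X12 X13) X13) = (t (p X12 (t (t X12 X13) (t X13 X14))) X13)" by (metis s13775 s1588 cp ct abc)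
  have s14640: "\<And>X12 X13 X14. X12 \<in> S \<Longrightarrow> X13 \<in> S \<Longrightarrow> X14 \<in> S \<Longrightarrow> (t (t X12 X13) X13) = (t (p X12 (t X12 (t X13 (t X13 X14)))) X13)" by (metis s14561 ta cp ct abc)
  have s14641: "\<And>X12 X13. X12 \<in> S \<Longrightarrow> X13 \<in> S \<Longrightarrow> (t X12 X13) = (t (t X12 X13) X13)" by (metis s14640 s13775 cp ct abc)
  have s16028: "\<And>X65 X66 X67. X65 \<in> S \<Longrightarrow> X66 \<in> S \<Longrightarrow> X67 \<in> S \<Longrightarrow> (t X65 (t X66 X67)) = (t (t X65 (t X66 X67)) X67)" by (metis s14641 ta cp ct abc)
  have s16185: "\<And>X50 X51 X52. X50 \<in> S \<Longrightarrow> X51 \<in> S \<Longrightarrow> X52 \<in> S \<Longrightarrow> (p (t X50 X51) (t (t X50 X52) (t X50 X51))) = (t (t X50 (p X51 X52)) (p (t X50 X51) (t (t X50 X52) (t X50 X51))))" by (metis s342 dl cp ct abc)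
  have s16289: "\<And>X90 X91 X92 X93. X90 \<in> S \<Longrightarrow> X91 \<in> S \<Longrightarrow> X92 \<in> S \<Longrightarrow> X93 \<in> S \<Longrightarrow> (t (p (p X90 X91) (t X92 X93)) (p X90 (t X91 X90))) = (p (p X90 (t X91 X90)) (t X92 (t X93 (p X90 (t X91 X90)))))" by (metis s109 s342 cp ct abc)
  have s16308: "\<And>X147 X148 X149. X147 \<in> S \<Longrightarrow> X148 \<in> S \<Longrightarrow> X149 \<in> S \<Longrightarrow> (t (p (p X147 X148) X149) (p X147 (t X148 X147))) = (t (p (p X147 (t X148 X147)) X149) (p X147 (t X148 X147)))" by (metis s1588 s342 cp ct abc)
  have s16343: "\<And>X50 X51 X52. X50 \<in> S \<Longrightarrow> X51 \<in> S \<Longrightarrow> X52 \<in> S \<Longrightarrow> (t (p X50 (t X50 X52)) (t X50 X51)) = (t (t X50 (p X51 X52)) (t (p X50 (t X50 X52)) (t X50 X51)))" by (metis s16185 s102 cp ct abc)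
  have s16344: "\<And>X50 X51 X52. X50 \<in> S \<Longrightarrow> X51 \<in> S \<Longrightarrow> X52 \<in> S \<Longrightarrow> (t X50 (t (p X50 X52) (t X50 X51))) = (t (t X50 (p X51 X52)) (t X50 (t (p X50 X52) (t X50 X51))))" by (metis s16343 s254 cp ct abc)
  have s16345: "\<And>X50 X51 X52. X50 \<in> S \<Longrightarrow> X51 \<in> S \<Longrightarrow> X52 \<in> S \<Longrightarrow> (t X50 X51) = (t (t X50 (p X51 X52)) (t X50 X51))" by (metis s16344 s1722 cp ct abc)
  have s16518: "\<And>X90 X91 X92 X93. X90 \<in> S \<Longrightarrow> X91 \<in> S \<Longrightarrow> X92 \<in> S \<Longrightarrow> X93 \<in> S \<Longrightarrow> (p (p X90 (t X91 X90)) (t X92 (t X93 (p X90 (t X91 X90))))) = (t (p X90 (p X91 (t X92 X93))) (p X90 (t X91 X90)))" by (metis s16289 pa cp ct abc)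
  have s16519: "\<And>X90 X91 X92 X93. X90 \<in> S \<Longrightarrow> X91 \<in> S \<Longrightarrow> X92 \<in> S \<Longrightarrow> X93 \<in> S \<Longrightarrow> (p (p X90 (t X91 X90)) (t X92 (t X93 (p X90 (t X91 X90))))) = (p X90 (t (p X91 (t X92 X93)) (p X90 (t X91 X90))))" by (metis s16518 s1673 cp ct abc)
  have s16551: "\<And>X147 X148 X149. X147 \<in> S \<Longrightarrow> X148 \<in> S \<Longrightarrow> X149 \<in> S \<Longrightarrow> (t (p (p X147 X148) X149) (p X147 (t X148 X147))) = (t (p X147 (p (t X148 X147) X149)) (p X147 (t X148 X147)))" by (metis s16308 pa cp ct abc)
  have s16552: "\<And>X147 X148 X149. X147 \<in> S \<Longrightarrow> X148 \<in> S \<Longrightarrow> X149 \<in> S \<Longrightarrow> (t (p X147 (p (t X148 X147) X149)) (p X147 (t X148 X147))) = (t (p X147 (p X148 X149)) (p X147 (t X148 X147)))" by (metis s16551 pa cp ct abc)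
  have s16553: "\<And>X147 X148 X149. X147 \<in> S \<Longrightarrow> X148 \<in> S \<Longrightarrow> X149 \<in> S \<Longrightarrow> (t (p X147 (p (t X148 X147) X149)) (p X147 (t X148 X147))) = (p X147 (t (p X148 X149) (p X147 (t X148 X147))))" by (metis s16552 s1673 cp ct abc)
  have s16704: "\<And>X19 X20 X21. X19 \<in> S \<Longrightarrow> X20 \<in> S \<Longrightarrow> X21 \<in> S \<Longrightarrow> (p X19 (p (t (p X20 (p X19 X20)) X19) X21)) = (p (p X19 (t X20 X19)) X21)" by (metis pa s352 cp ct abc)
  have s16924: "\<And>X19 X20 X21. X19 \<in> S \<Longrightarrow> X20 \<in> S \<Longrightarrow> X21 \<in> S \<Longrightarrow> (p X19 (p (t (p X20 (p X19 X20)) X19) X21)) = (p X19 (p (t X20 X19) X21))" by (metis s16704 pa cp ct abc)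
  have s20857: "\<And>X4 X5 X6. X4 \<in> S \<Longrightarrow> X5 \<in> S \<Longrightarrow> X6 \<in> S \<Longrightarrow> (t X4 X5) = (t X4 (t (p X5 X6) (t X4 X5)))" by (metis s16345 ta cp ct abc)
  have s20916: "\<And>X13 X14 X15. X13 \<in> S \<Longrightarrow> X14 \<in> S \<Longrightarrow> X15 \<in> S \<Longrightarrow> (t X13 X14) = (t X13 (p X14 (t X15 (t X13 X14))))" by (metis s356 s20857 cp ct abc)
  have s20970: "\<And>X113 X114. X113 \<in> S \<Longrightarrow> X114 \<in> S \<Longrightarrow> (p a (t X113 a)) = (t (p (t a b) X113) (p a (t X114 (p a (t X113 a)))))" by (metis s20916 s103 cp ct abc)
  have s24176: "\<And>X134 X135 X136 X137 X138. X134 \<in> S \<Longrightarrow> X135 \<in> S \<Longrightarrow> X136 \<in> S \<Longrightarrow> X137 \<in> S \<Longrightarrow> X138 \<in> S \<Longrightarrow> (t (p X137 (t X138 (p X134 (t X135 X136)))) X134) = (p (t X137 X134) (t X138 (p X134 (t X135 (t X136 X134)))))" by (metis s109 s1746 cp ct abc)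
  have s24478: "\<And>X43 X44 X45. X43 \<in> S \<Longrightarrow> X44 \<in> S \<Longrightarrow> X45 \<in> S \<Longrightarrow> (t (p X44 (t X45 (t (p a X43) b))) a) = (t (p X44 (t X45 (p a (t X43 b)))) a)" by (metis s6904 s24176 cp ct abc)
  have s74977: "\<And>X21 X22. X21 \<in> S \<Longrightarrow> X22 \<in> S \<Longrightarrow> (p a (t (p (t X21 b) (t X22 (t (p a X21) b))) a)) = (t (t (p (p a X21) X22) (t (p a X21) b)) a)" by (metis s2070 s102 cp ct abc)
  have s75294: "\<And>X21 X22. X21 \<in> S \<Longrightarrow> X22 \<in> S \<Longrightarrow> (p a (t (p (t X21 b) (t X22 (t (p a X21) b))) a)) = (t (p (p a X21) X22) (t (t (p a X21) b) a))" by (metis s74977 ta cp ct abc)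
  have s75295: "\<And>X21 X22. X21 \<in> S \<Longrightarrow> X22 \<in> S \<Longrightarrow> (p a (t (p (t X21 b) (t X22 (t (p a X21) b))) a)) = (t (p (p a X21) X22) (t (p a X21) (t b a)))" by (metis s75294 ta cp ct abc)
  have s75296: "\<And>X21 X22. X21 \<in> S \<Longrightarrow> X22 \<in> S \<Longrightarrow> (p a (t (p (t X21 b) (t X22 (t (p a X21) b))) a)) = (t (p (p a X21) X22) (p a (t X21 (t b a))))" by (metis s75295 s105 cp ct abc)
  have s75297: "\<And>X21 X22. X21 \<in> S \<Longrightarrow> X22 \<in> S \<Longrightarrow> (p a (t (p (t X21 b) (t X22 (t (p a X21) b))) a)) = (t (p a (p X21 X22)) (p a (t X21 (t b a))))" by (metis s75296 pa cp ct abc)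
  have s75298: "\<And>X21 X22. X21 \<in> S \<Longrightarrow> X22 \<in> S \<Longrightarrow> (t (p a (p X21 X22)) (p a (t X21 (t b a)))) = (p a (t (p (t X21 b) (t X22 (p a (t X21 b)))) a))" by (metis s75297 s24478 cp ct abc)
  have s78814: "\<And>X0 X1 X2. X0 \<in> S \<Longrightarrow> X1 \<in> S \<Longrightarrow> X2 \<in> S \<Longrightarrow> (p X0 (t X2 (p X0 (t X1 X0)))) = (t (p X0 X2) (p X0 (t X1 X0)))" by (metis s258 s21 cp ct abc)
  have s78815: "\<And>X3 X4 X5 X6. X3 \<in> S \<Longrightarrow> X4 \<in> S \<Longrightarrow> X5 \<in> S \<Longrightarrow> X6 \<in> S \<Longrightarrow> (t (p X3 X6) (p X3 (t X4 (t X5 X3)))) = (p X3 (t X6 (p X3 (t X4 (t X5 X3)))))" by (metis s258 s43 cp ct abc)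
  have s79253: "\<And>X21 X22. X21 \<in> S \<Longrightarrow> X22 \<in> S \<Longrightarrow> (p a (t (p (t X21 b) (t X22 (p a (t X21 b)))) a)) = (p a (t (p X21 X22) (p a (t X21 (t b a)))))" by (metis s75298 s78815 cp ct abc)
  have s85097: "\<And>X7 X8 X9. X7 \<in> S \<Longrightarrow> X8 \<in> S \<Longrightarrow> X9 \<in> S \<Longrightarrow> (t X7 X8) = (t (t X7 X8) (t (p X7 X9) X8))" by (metis s16028 s13773 cp ct abc)
  have s92321: "\<And>X37 X38 X39. X37 \<in> S \<Longrightarrow> X38 \<in> S \<Longrightarrow> X39 \<in> S \<Longrightarrow> (t (p X37 (p (t (p X38 (p X37 X38)) X37) X39)) (p X37 (t X38 X37))) = (p X37 (p (t (p X38 (p X37 X38)) X37) (t X39 (p X37 (t X38 X37)))))" by (metis s353 s352 cp ct abc)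
  have s92862: "\<And>X37 X38 X39. X37 \<in> S \<Longrightarrow> X38 \<in> S \<Longrightarrow> X39 \<in> S \<Longrightarrow> (t (p X37 (p (t (p X38 (p X37 X38)) X37) X39)) (p X37 (t X38 X37))) = (p X37 (p (t X38 X37) (t X39 (p X37 (t X38 X37)))))" by (metis s92321 s16924 cp ct abc)
  have s92863: "\<And>X37 X38 X39. X37 \<in> S \<Longrightarrow> X38 \<in> S \<Longrightarrow> X39 \<in> S \<Longrightarrow> (t (p X37 (p (t (p X38 (p X37 X38)) X37) X39)) (p X37 (t X38 X37))) = (p X37 (t (p X38 (t X39 (p X37 X38))) X37))" by (metis s92862 s1777 cp ct abc)
  have s92864: "\<And>X37 X38 X39. X37 \<in> S \<Longrightarrow> X38 \<in> S \<Longrightarrow> X39 \<in> S \<Longrightarrow> (p X37 (t (p X38 (t X39 (p X37 X38))) X37)) = (t (p X37 (p (t X38 X37) X39)) (p X37 (t X38 X37)))" by (metis s92863 s16924 cp ct abc)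
  have s92865: "\<And>X37 X38 X39. X37 \<in> S \<Longrightarrow> X38 \<in> S \<Longrightarrow> X39 \<in> S \<Longrightarrow> (p X37 (t (p X38 (t X39 (p X37 X38))) X37)) = (p X37 (t (p X38 X39) (p X37 (t X38 X37))))" by (metis s92864 s16553 cp ct abc)
  have s106786: "\<And>X46 X47 X48. X46 \<in> S \<Longrightarrow> X47 \<in> S \<Longrightarrow> X48 \<in> S \<Longrightarrow> (t (p X46 X48) X47) = (t (p X46 X48) (p X47 (t X46 X47)))" by (metis s20916 s85097 cp ct abc)
  have s106824: "\<And>X37 X38 X39. X37 \<in> S \<Longrightarrow> X38 \<in> S \<Longrightarrow> X39 \<in> S \<Longrightarrow> (p X37 (t (p X38 (t X39 (p X37 X38))) X37)) = (p X37 (t (p X38 X39) X37))" by (metis s92865 s106786 cp ct abc)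
  have s106839: "\<And>X90 X91 X92 X93. X90 \<in> S \<Longrightarrow> X91 \<in> S \<Longrightarrow> X92 \<in> S \<Longrightarrow> X93 \<in> S \<Longrightarrow> (p (p X90 (t X91 X90)) (t X92 (t X93 (p X90 (t X91 X90))))) = (p X90 (t (p X91 (t X92 X93)) X90))" by (metis s16519 s106786 cp ct abc)
  have s106854: "\<And>X21 X22. X21 \<in> S \<Longrightarrow> X22 \<in> S \<Longrightarrow> (p a (t (p (t X21 b) X22) a)) = (p a (t (p X21 X22) (p a (t X21 (t b a)))))" by (metis s79253 s106824 cp ct abc)
  have s121062: "\<And>X13 X14. X13 \<in> S \<Longrightarrow> X14 \<in> S \<Longrightarrow> (t (p (p (t a b) (t (t a b) X13)) (t X14 (p a X13))) a) = (t (t (p (t a b) X14) (p (t a b) X13)) a)" by (metis s1839 s258 cp ct abc)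
  have s121517: "\<And>X13 X14. X13 \<in> S \<Longrightarrow> X14 \<in> S \<Longrightarrow> (t (p (p (t a b) (t (t a b) X13)) (t X14 (p a X13))) a) = (t (p (t a b) X14) (t (p (t a b) X13) a))" by (metis s121062 ta cp ct abc)
  have s121518: "\<And>X13 X14. X13 \<in> S \<Longrightarrow> X14 \<in> S \<Longrightarrow> (t (p (p (t a b) (t (t a b) X13)) (t X14 (p a X13))) a) = (t (p (t a b) X14) (p a (t X13 a)))" by (metis s121517 s103 cp ct abc)
  have s121519: "\<And>X13 X14. X13 \<in> S \<Longrightarrow> X14 \<in> S \<Longrightarrow> (t (p (t a b) X14) (p a (t X13 a))) = (t (p (t a b) (p (t (t a b) X13) (t X14 (p a X13)))) a)" by (metis s121518 pa cp ct abc)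
  have s121520: "\<And>X13 X14. X13 \<in> S \<Longrightarrow> X14 \<in> S \<Longrightarrow> (t (p (t a b) X14) (p a (t X13 a))) = (t (p (t a b) (p (t a (t b X13)) (t X14 (p a X13)))) a)" by (metis s121519 ta cp ct abc)
  have s121521: "\<And>X13 X14. X13 \<in> S \<Longrightarrow> X14 \<in> S \<Longrightarrow> (t (p (t a b) X14) (p a (t X13 a))) = (t (p (t a (p b (t b X13))) (t X14 (p a X13))) a)" by (metis s121520 s74 cp ct abc)
  have s121522: "\<And>X13 X14. X13 \<in> S \<Longrightarrow> X14 \<in> S \<Longrightarrow> (t (p (t a b) X14) (p a (t X13 a))) = (p a (t (t X14 (p a X13)) a))" by (metis s121521 s501 cp ct abc)
  have s121523: "\<And>X13 X14. X13 \<in> S \<Longrightarrow> X14 \<in> S \<Longrightarrow> (t (p (t a b) X14) (p a (t X13 a))) = (p a (t X14 (t (p a X13) a)))" by (metis s121522 ta cp ct abc)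
  have s121524: "\<And>X13 X14. X13 \<in> S \<Longrightarrow> X14 \<in> S \<Longrightarrow> (t (p (t a b) X14) (p a (t X13 a))) = (p a (t X14 (p a (t X13 a))))" by (metis s121523 s101 cp ct abc)
  have s182907: "\<And>X47 X48 X49 X50. X47 \<in> S \<Longrightarrow> X48 \<in> S \<Longrightarrow> X49 \<in> S \<Longrightarrow> X50 \<in> S \<Longrightarrow> (t (p (t X47 X50) (p (t X47 X48) X49)) (t X47 X50)) = (t (p X47 (t X49 X47)) (t X50 (t X47 X50)))" by (metis s1834 s1575 cp ct abc)
  have s183565: "\<And>X47 X48 X49 X50. X47 \<in> S \<Longrightarrow> X48 \<in> S \<Longrightarrow> X49 \<in> S \<Longrightarrow> X50 \<in> S \<Longrightarrow> (t (p (t X47 X50) (p (t X47 X48) X49)) (t X47 X50)) = (t (p X47 X49) (t X47 (t X50 (t X47 X50))))" by (metis s182907 s336 cp ct abc)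
  have s183566: "\<And>X47 X48 X49 X50. X47 \<in> S \<Longrightarrow> X48 \<in> S \<Longrightarrow> X49 \<in> S \<Longrightarrow> X50 \<in> S \<Longrightarrow> (t (p (t X47 X50) (p (t X47 X48) X49)) (t X47 X50)) = (t (p X47 X49) (t X47 X50))" by (metis s183565 s40 cp ct abc)
  have s183567: "\<And>X47 X48 X49 X50. X47 \<in> S \<Longrightarrow> X48 \<in> S \<Longrightarrow> X49 \<in> S \<Longrightarrow> X50 \<in> S \<Longrightarrow> (t (p X47 X49) (t X47 X50)) = (t (p (t X47 (p X50 X48)) X49) (t X47 X50))" by (metis s183566 s74 cp ct abc)
  have s183572: "\<And>X47 X48 X49 X50. X47 \<in> S \<Longrightarrow> X48 \<in> S \<Longrightarrow> X49 \<in> S \<Longrightarrow> X50 \<in> S \<Longrightarrow> (p (t X47 X48) (t (p (t X47 X49) X50) (t X47 X48))) = (t (p X47 X50) (t X47 X48))" by (metis s1304 s183567 cp ct abc)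
  have s213982: "\<And>X308 X309 X310. X308 \<in> S \<Longrightarrow> X309 \<in> S \<Longrightarrow> X310 \<in> S \<Longrightarrow> (p (p a (t X308 a)) (t (p (t (p (t a b) X308) X309) X310) (p a (t X308 a)))) = (t (p (p (t a b) X308) X310) (p a (t X308 a)))" by (metis s183572 s455 cp ct abc)
  have s214825: "\<And>X308 X309 X310. X308 \<in> S \<Longrightarrow> X309 \<in> S \<Longrightarrow> X310 \<in> S \<Longrightarrow> (p (p a (t X308 a)) (t (p (t (p (t a b) X308) X309) X310) (p a (t X308 a)))) = (t (p (t a b) (p X308 X310)) (p a (t X308 a)))" by (metis s213982 pa cp ct abc)
  have s214826: "\<And>X308 X309 X310. X308 \<in> S \<Longrightarrow> X309 \<in> S \<Longrightarrow> X310 \<in> S \<Longrightarrow> (p (p a (t X308 a)) (t (p (t (p (t a b) X308) X309) X310) (p a (t X308 a)))) = (p a (t (p X308 X310) (p a (t X308 a))))" by (metis s214825 s121524 cp ct abc)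
  have s214827: "\<And>X308 X309 X310. X308 \<in> S \<Longrightarrow> X309 \<in> S \<Longrightarrow> X310 \<in> S \<Longrightarrow> (p (p a (t X308 a)) (t (p (t (p (t a b) X308) X309) X310) (p a (t X308 a)))) = (p a (t (p X308 X310) a))" by (metis s214826 s106786 cp ct abc)
  have s215930: "\<And>X3 X4. X3 \<in> S \<Longrightarrow> X4 \<in> S \<Longrightarrow> (p a (t (p X3 (t (p (t a b) X3) X4)) a)) = (t (p (t a b) X3) (p a (t X4 a)))" by (metis s450 s1822 cp ct abc)
  have s215956: "\<And>X48 X49 X50. X48 \<in> S \<Longrightarrow> X49 \<in> S \<Longrightarrow> X50 \<in> S \<Longrightarrow> (p (p a (t X48 a)) (t (p (t a b) X48) (t X49 (t X50 (p a (t X48 a)))))) = (p (p a (t X48 a)) (t (t (p (t a b) X48) (p a X49)) (t X50 (p a (t X48 a)))))" by (metis s1808 s450 cp ct abc)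
  have s215979: "\<And>X102 X103. X102 \<in> S \<Longrightarrow> X103 \<in> S \<Longrightarrow> (p (p a (t X102 a)) (t (t (p (t a b) X102) X103) (p a (t X102 a)))) = (t (t (p (t a b) X102) (p a X103)) (p a (t X102 a)))" by (metis s101 s450 cp ct abc)
  have s216008: "\<And>X181 X182. X181 \<in> S \<Longrightarrow> X182 \<in> S \<Longrightarrow> (p (p a (t X181 a)) (t (t (p (t a b) X181) X182) (p a (t X181 a)))) = (p (p a (t X181 a)) (t (p (t (p (t a b) X181) X182) (t (p (t a b) X181) (p a X182))) (p a (t X181 a))))" by (metis s352 s450 cp ct abc)
  have s216018: "\<And>X207 X208 X209. X207 \<in> S \<Longrightarrow> X208 \<in> S \<Longrightarrow> X209 \<in> S \<Longrightarrow> (p (p a (t X207 a)) (t (t (p (t a b) X207) X208) (t X209 (p a (t X207 a))))) = (p (p a (t X207 a)) (t (t (p (t a b) X207) (p a X208)) (t X209 (p a (t X207 a)))))" by (metis s591 s450 cp ct abc)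
  have s216566: "\<And>X3 X4. X3 \<in> S \<Longrightarrow> X4 \<in> S \<Longrightarrow> (p a (t (p X3 (t (p (t a b) X3) X4)) a)) = (p a (t X3 (p a (t X4 a))))" by (metis s215930 s121524 cp ct abc)
  have s216680: "\<And>X48 X49 X50. X48 \<in> S \<Longrightarrow> X49 \<in> S \<Longrightarrow> X50 \<in> S \<Longrightarrow> (p (p a (t X48 a)) (t (p (t a b) X48) (t X49 (t X50 (p a (t X48 a)))))) = (p a (t (p X48 (t (t (p (t a b) X48) (p a X49)) X50)) a))" by (metis s215956 s106839 cp ct abc)
  have s216681: "\<And>X48 X49 X50. X48 \<in> S \<Longrightarrow> X49 \<in> S \<Longrightarrow> X50 \<in> S \<Longrightarrow> (p (p a (t X48 a)) (t (p (t a b) X48) (t X49 (t X50 (p a (t X48 a)))))) = (p a (t (p X48 (t (p (t a b) X48) (t (p a X49) X50))) a))" by (metis s216680 ta cp ct abc)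
  have s216682: "\<And>X48 X49 X50. X48 \<in> S \<Longrightarrow> X49 \<in> S \<Longrightarrow> X50 \<in> S \<Longrightarrow> (p (p a (t X48 a)) (t (p (t a b) X48) (t X49 (t X50 (p a (t X48 a)))))) = (p a (t X48 (p a (t (t (p a X49) X50) a))))" by (metis s216681 s216566 cp ct abc)
  have s216683: "\<And>X48 X49 X50. X48 \<in> S \<Longrightarrow> X49 \<in> S \<Longrightarrow> X50 \<in> S \<Longrightarrow> (p (p a (t X48 a)) (t (p (t a b) X48) (t X49 (t X50 (p a (t X48 a)))))) = (p a (t X48 (p a (t (p a X49) (t X50 a)))))" by (metis s216682 ta cp ct abc)
  have s216684: "\<And>X48 X49 X50. X48 \<in> S \<Longrightarrow> X49 \<in> S \<Longrightarrow> X50 \<in> S \<Longrightarrow> (p (p a (t X48 a)) (t (p (t a b) X48) (t X49 (t X50 (p a (t X48 a)))))) = (p a (t X48 (p a (t X49 (t X50 a)))))" by (metis s216683 s591 cp ct abc)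
  have s216740: "\<And>X102 X103. X102 \<in> S \<Longrightarrow> X103 \<in> S \<Longrightarrow> (p (p a (t X102 a)) (t (t (p (t a b) X102) X103) (p a (t X102 a)))) = (t (p (t a b) X102) (t (p a X103) (p a (t X102 a))))" by (metis s215979 ta cp ct abc)
  have s216741: "\<And>X102 X103. X102 \<in> S \<Longrightarrow> X103 \<in> S \<Longrightarrow> (p (p a (t X102 a)) (t (t (p (t a b) X102) X103) (p a (t X102 a)))) = (t (p (t a b) X102) (p a (t X103 (p a (t X102 a)))))" by (metis s216740 s78814 cp ct abc)
  have s216742: "\<And>X102 X103. X102 \<in> S \<Longrightarrow> X103 \<in> S \<Longrightarrow> (p a (t X102 a)) = (p (p a (t X102 a)) (t (t (p (t a b) X102) X103) (p a (t X102 a))))" by (metis s216741 s20970 cp ct abc)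
  have s216743: "\<And>X102 X103. X102 \<in> S \<Longrightarrow> X103 \<in> S \<Longrightarrow> (p a (t X102 a)) = (p (p a (t X102 a)) (t (p (t a b) X102) (t X103 (p a (t X102 a)))))" by (metis s216742 ta cp ct abc)
  have s216846: "\<And>X181 X182. X181 \<in> S \<Longrightarrow> X182 \<in> S \<Longrightarrow> (p (p a (t X181 a)) (t (t (p (t a b) X181) X182) (p a (t X181 a)))) = (p a (t (p X181 (t (p (t a b) X181) (p a X182))) a))" by (metis s216008 s214827 cp ct abc)
  have s216847: "\<And>X181 X182. X181 \<in> S \<Longrightarrow> X182 \<in> S \<Longrightarrow> (p (p a (t X181 a)) (t (t (p (t a b) X181) X182) (p a (t X181 a)))) = (p a (t X181 (p a (t (p a X182) a))))" by (metis s216846 s216566 cp ct abc)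
  have s216848: "\<And>X181 X182. X181 \<in> S \<Longrightarrow> X182 \<in> S \<Longrightarrow> (p (p a (t X181 a)) (t (t (p (t a b) X181) X182) (p a (t X181 a)))) = (p a (t X181 (p a (p a (t X182 a)))))" by (metis s216847 s101 cp ct abc)
  have s216849: "\<And>X181 X182. X181 \<in> S \<Longrightarrow> X182 \<in> S \<Longrightarrow> (p (p a (t X181 a)) (t (t (p (t a b) X181) X182) (p a (t X181 a)))) = (p a (t X181 (p a (t X182 a))))" by (metis s216848 s27 cp ct abc)
  have s216850: "\<And>X181 X182. X181 \<in> S \<Longrightarrow> X182 \<in> S \<Longrightarrow> (p a (t X181 (p a (t X182 a)))) = (p (p a (t X181 a)) (t (p (t a b) X181) (t X182 (p a (t X181 a)))))" by (metis s216849 ta cp ct abc)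
  have s216851: "\<And>X181 X182. X181 \<in> S \<Longrightarrow> X182 \<in> S \<Longrightarrow> (p a (t X181 a)) = (p a (t X181 (p a (t X182 a))))" by (metis s216850 s216743 cp ct abc)
  have s216872: "\<And>X3 X4. X3 \<in> S \<Longrightarrow> X4 \<in> S \<Longrightarrow> (p a (t X3 a)) = (p a (t (p X3 (t (p (t a b) X3) X4)) a))" by (metis s216566 s216851 cp ct abc)
  have s216938: "\<And>X207 X208 X209. X207 \<in> S \<Longrightarrow> X208 \<in> S \<Longrightarrow> X209 \<in> S \<Longrightarrow> (p (p a (t X207 a)) (t (t (p (t a b) X207) X208) (t X209 (p a (t X207 a))))) = (p a (t (p X207 (t (t (p (t a b) X207) (p a X208)) X209)) a))" by (metis s216018 s106839 cp ct abc)
  have s216939: "\<And>X207 X208 X209. X207 \<in> S \<Longrightarrow> X208 \<in> S \<Longrightarrow> X209 \<in> S \<Longrightarrow> (p (p a (t X207 a)) (t (t (p (t a b) X207) X208) (t X209 (p a (t X207 a))))) = (p a (t (p X207 (t (p (t a b) X207) (t (p a X208) X209))) a))" by (metis s216938 ta cp ct abc)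
  have s216940: "\<And>X207 X208 X209. X207 \<in> S \<Longrightarrow> X208 \<in> S \<Longrightarrow> X209 \<in> S \<Longrightarrow> (p a (t X207 a)) = (p (p a (t X207 a)) (t (t (p (t a b) X207) X208) (t X209 (p a (t X207 a)))))" by (metis s216939 s216872 cp ct abc)
  have s216941: "\<And>X207 X208 X209. X207 \<in> S \<Longrightarrow> X208 \<in> S \<Longrightarrow> X209 \<in> S \<Longrightarrow> (p a (t X207 a)) = (p (p a (t X207 a)) (t (p (t a b) X207) (t X208 (t X209 (p a (t X207 a))))))" by (metis s216940 ta cp ct abc)
  have s216942: "\<And>X48 X49 X50. X48 \<in> S \<Longrightarrow> X49 \<in> S \<Longrightarrow> X50 \<in> S \<Longrightarrow> (p a (t X48 a)) = (p a (t X48 (p a (t X49 (t X50 a)))))" by (metis s216684 s216941 cp ct abc)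
  have s216948: "\<And>X21 X22. X21 \<in> S \<Longrightarrow> X22 \<in> S \<Longrightarrow> (p a (t (p X21 X22) a)) = (p a (t (p (t X21 b) X22) a))" by (metis s106854 s216942 cp ct abc)
  have s216952: "\<And>X3 X4. X3 \<in> S \<Longrightarrow> X4 \<in> S \<Longrightarrow> (t (p (t (p a X3) b) X4) a) = (p a (t (p X3 X4) a))" by (metis s2070 s216948 cp ct abc)
  have s217274: "\<And>X28 X29. X28 \<in> S \<Longrightarrow> X29 \<in> S \<Longrightarrow> (t X28 (p a (t X29 a))) = (t X28 (p a (t X28 a)))" by (metis s10191 s216851 cp ct abc)
  have s217316: "\<And>X28 X29. X28 \<in> S \<Longrightarrow> X29 \<in> S \<Longrightarrow> (t X28 (p a a)) = (t X28 (p a (t X29 a)))" by (metis s217274 s95 cp ct abc)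
  have s217317: "\<And>X28 X29. X28 \<in> S \<Longrightarrow> X29 \<in> S \<Longrightarrow> (t X28 a) = (t X28 (p a (t X29 a)))" by (metis s217316 pi cp ct abc)
  have s217595: "\<And>X0. X0 \<in> S \<Longrightarrow> (t (t (p a X0) b) a) = (p a (t (p X0 (t X0 b)) a))" by (metis s216952 s2145 cp ct abc)
  have s218083: "\<And>X0. X0 \<in> S \<Longrightarrow> (t (t (p a X0) b) a) = (p a (t X0 (t (p X0 b) a)))" by (metis s217595 s254 cp ct abc)
  have s218084: "\<And>X0. X0 \<in> S \<Longrightarrow> (t (t (p a X0) b) a) = (p a (t X0 (p a (t b a))))" by (metis s218083 s2836 cp ct abc)
  have s218085: "\<And>X0. X0 \<in> S \<Longrightarrow> (p a (t X0 a)) = (t (t (p a X0) b) a)" by (metis s218084 s217317 cp ct abc)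
  have s218086: "\<And>X1. X1 \<in> S \<Longrightarrow> (p a (t X1 (t b a))) = (p a (t X1 a))" by (metis s460 s218085 cp ct abc)
  have s220903: "(p a (t c a)) \<noteq> (p a (t c a))" by (metis s22 s218086 cp ct abc)
  show False using s220903 by (blast | metis cp ct abc)
qed

lemma dual: "rsr S p (\<lambda>x y. t y x)"
proof unfold_locales
  fix x y assume "x \<in> S" "y \<in> S"
  then show "p x (t x (t y x)) = x" by (metis ab ta)
qed (auto simp: cp ct pa ta dl dr pi ti)

lemma Ld: assumes "a \<in> S" "b \<in> S" "c \<in> S" and h: "t (t a b) a = a"
  shows "p a (t (t a b) c) = p a (t a c)"
proof -
  interpret d: rsr S p "\<lambda>x y. t y x" by (rule dual)
  have "t a (t b a) = a" using h assms by (simp add: ta)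
  from d.L[OF assms(1,2,3) this] show ?thesis using assms by (simp add: ta ct)
qed

lemma R: assumes "a \<in> S" "b \<in> S" "c \<in> S" and h: "t (t a b) a = a" and h2: "t (t b a) b = b"
  shows "t (t (p c a) (p c b)) (p c a) = p c a"
proof (rule ccontr)
  assume neg: "\<not> ?thesis"
  note abc = assms(1-3)
  have l: "\<And>X Y Z. X \<in> S \<Longrightarrow> Y \<in> S \<Longrightarrow> Z \<in> S \<Longrightarrow> t (t X Y) X = X \<Longrightarrow> p X (t (t Z Y) X) = p X (t Z X)"
    using L by blast
  have ld: "\<And>X Y Z. X \<in> S \<Longrightarrow> Y \<in> S \<Longrightarrow> Z \<in> S \<Longrightarrow> t (t X Y) X = X \<Longrightarrow> p X (t (t X Y) Z) = p X (t X Z)"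
    using Ld by blast
  have r29: "\<And>X0 X1. X0 \<in> S \<Longrightarrow> X1 \<in> S \<Longrightarrow> (p X0 (t X0 (t X1 X0))) = X0" by (metis ab ta cp ct abc)
  have r30: "\<And>X0 X1 X2. X0 \<in> S \<Longrightarrow> X1 \<in> S \<Longrightarrow> X2 \<in> S \<Longrightarrow> (p X0 (t X2 X0)) = (p X0 (t X2 (t X1 X0))) \<or> (t (t X0 X1) X0) \<noteq> X0" by (metis l ta cp ct abc)
  have r31: "\<And>X0 X1 X2. X0 \<in> S \<Longrightarrow> X1 \<in> S \<Longrightarrow> X2 \<in> S \<Longrightarrow> (t X0 (t X1 X0)) \<noteq> X0 \<or> (p X0 (t X2 X0)) = (p X0 (t X2 (t X1 X0)))" by (metis r30 ta cp ct abc)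
  have r32: "\<And>X0 X1 X2. X0 \<in> S \<Longrightarrow> X1 \<in> S \<Longrightarrow> X2 \<in> S \<Longrightarrow> (p X0 (t X0 X2)) = (p X0 (t X0 (t X1 X2))) \<or> (t (t X0 X1) X0) \<noteq> X0" by (metis ld ta cp ct abc)
  have r33: "\<And>X0 X1 X2. X0 \<in> S \<Longrightarrow> X1 \<in> S \<Longrightarrow> X2 \<in> S \<Longrightarrow> (t X0 (t X1 X0)) \<noteq> X0 \<or> (p X0 (t X0 X2)) = (p X0 (t X0 (t X1 X2)))" by (metis r32 ta cp ct abc)
  have r40: "\<And>X0 X1. X0 \<in> S \<Longrightarrow> X1 \<in> S \<Longrightarrow> (p X0 X1) = (p X0 (p X0 X1))" by (metis pa pi cp ct abc)
  have r41: "\<And>X2 X3 X4. X2 \<in> S \<Longrightarrow> X3 \<in> S \<Longrightarrow> X4 \<in> S \<Longrightarrow> (p X2 (p (t X2 (t X3 X2)) X4)) = (p X2 X4)" by (metis pa r29 cp ct abc)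
  have r59: "\<And>X0 X1. X0 \<in> S \<Longrightarrow> X1 \<in> S \<Longrightarrow> (t X0 X1) = (t X0 (t X0 X1))" by (metis ta ti cp ct abc)
  have r63: "a = (t a (t b a))" by (metis ta h cp ct abc)
  have r65: "\<And>X3 X4. X3 \<in> S \<Longrightarrow> X4 \<in> S \<Longrightarrow> (t X3 X4) = (t X3 (t X4 (t X3 X4)))" by (metis ta ti cp ct abc)
  have r69: "\<And>X2 X3 X4. X2 \<in> S \<Longrightarrow> X3 \<in> S \<Longrightarrow> X4 \<in> S \<Longrightarrow> (p X4 (t X4 (t X2 (t X3 X4)))) = X4" by (metis r29 ta cp ct abc)
  have r79: "\<And>X0 X1. X0 \<in> S \<Longrightarrow> X1 \<in> S \<Longrightarrow> (t X0 (p X0 X1)) = (p X0 (t X0 X1))" by (metis dl ti cp ct abc)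
  have r82: "\<And>X4 X5 X6 X7. X4 \<in> S \<Longrightarrow> X5 \<in> S \<Longrightarrow> X6 \<in> S \<Longrightarrow> X7 \<in> S \<Longrightarrow> (t (t X4 X5) (p X6 X7)) = (p (t X4 (t X5 X6)) (t (t X4 X5) X7))" by (metis dl ta cp ct abc)
  have r84: "\<And>X0 X1. X0 \<in> S \<Longrightarrow> X1 \<in> S \<Longrightarrow> (t X0 (p X1 X0)) = (p (t X0 X1) X0)" by (metis dl ti cp ct abc)
  have r85: "\<And>X2. X2 \<in> S \<Longrightarrow> (t (t a b) (p X2 a)) = (p (t (t a b) X2) a)" by (metis dl h cp ct abc)
  have r88: "\<And>X8. X8 \<in> S \<Longrightarrow> (t a (p X8 (t b a))) = (p (t a X8) a)" by (metis dl r63 cp ct abc)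
  have r92: "\<And>X5 X6 X7 X8. X5 \<in> S \<Longrightarrow> X6 \<in> S \<Longrightarrow> X7 \<in> S \<Longrightarrow> X8 \<in> S \<Longrightarrow> (p (t X5 X6) (p (t X5 X7) X8)) = (p (t X5 (p X6 X7)) X8)" by (metis pa dl cp ct abc)
  have r95: "\<And>X4 X5 X6 X7. X4 \<in> S \<Longrightarrow> X5 \<in> S \<Longrightarrow> X6 \<in> S \<Longrightarrow> X7 \<in> S \<Longrightarrow> (t (t X4 X5) (p X6 X7)) = (p (t X4 (t X5 X6)) (t X4 (t X5 X7)))" by (metis r82 ta cp ct abc)
  have r96: "\<And>X4 X5 X6 X7. X4 \<in> S \<Longrightarrow> X5 \<in> S \<Longrightarrow> X6 \<in> S \<Longrightarrow> X7 \<in> S \<Longrightarrow> (p (t X4 (t X5 X6)) (t X4 (t X5 X7))) = (t X4 (t X5 (p X6 X7)))" by (metis r95 ta cp ct abc)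
  have r97: "\<And>X2. X2 \<in> S \<Longrightarrow> (t (t a b) (p X2 a)) = (p (t a (t b X2)) a)" by (metis r85 ta cp ct abc)
  have r109: "\<And>X0 X1. X0 \<in> S \<Longrightarrow> X1 \<in> S \<Longrightarrow> (t (p X0 X1) X0) = (p X0 (t X1 X0))" by (metis dr ti cp ct abc)
  have r112: "\<And>X4 X5 X6 X7. X4 \<in> S \<Longrightarrow> X5 \<in> S \<Longrightarrow> X6 \<in> S \<Longrightarrow> X7 \<in> S \<Longrightarrow> (t (p (t X4 X5) X7) X6) = (p (t X4 (t X5 X6)) (t X7 X6))" by (metis dr ta cp ct abc)
  have r115: "\<And>X0 X1. X0 \<in> S \<Longrightarrow> X1 \<in> S \<Longrightarrow> (t (p X1 X0) X0) = (p (t X1 X0) X0)" by (metis dr ti cp ct abc)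
  have r118: "\<And>X4 X5 X6 X7. X4 \<in> S \<Longrightarrow> X5 \<in> S \<Longrightarrow> X6 \<in> S \<Longrightarrow> X7 \<in> S \<Longrightarrow> (t (p X7 (t X4 X5)) X6) = (p (t X7 X6) (t X4 (t X5 X6)))" by (metis dr ta cp ct abc)
  have r136: "\<And>X2 X3 X4. X2 \<in> S \<Longrightarrow> X3 \<in> S \<Longrightarrow> X4 \<in> S \<Longrightarrow> (t (t X2 X3) X4) = (t X2 (t X3 (t (t X2 X3) X4)))" by (metis r59 ta cp ct abc)
  have r139: "\<And>X4 X5 X6. X4 \<in> S \<Longrightarrow> X5 \<in> S \<Longrightarrow> X6 \<in> S \<Longrightarrow> (t X4 (p (t X4 X5) X6)) = (p (t X4 X5) (t X4 X6))" by (metis dl r59 cp ct abc)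
  have r140: "\<And>X7 X8 X9. X7 \<in> S \<Longrightarrow> X8 \<in> S \<Longrightarrow> X9 \<in> S \<Longrightarrow> (t X7 (p X9 (t X7 X8))) = (p (t X7 X9) (t X7 X8))" by (metis dl r59 cp ct abc)
  have r145: "\<And>X2 X3 X4. X2 \<in> S \<Longrightarrow> X3 \<in> S \<Longrightarrow> X4 \<in> S \<Longrightarrow> (t X2 (t X3 X4)) = (t X2 (t X3 (t X2 (t X3 X4))))" by (metis r136 ta cp ct abc)
  have r148: "\<And>X4 X5 X6. X4 \<in> S \<Longrightarrow> X5 \<in> S \<Longrightarrow> X6 \<in> S \<Longrightarrow> (t X4 (p (t X4 X5) X6)) = (t X4 (p X5 X6))" by (metis r139 dl cp ct abc)
  have r149: "\<And>X7 X8 X9. X7 \<in> S \<Longrightarrow> X8 \<in> S \<Longrightarrow> X9 \<in> S \<Longrightarrow> (t X7 (p X9 (t X7 X8))) = (t X7 (p X9 X8))" by (metis r140 dl cp ct abc)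
  have r153: "(p c a) \<noteq> (t (p c a) (t (p c b) (p c a)))" by (metis neg ta cp ct abc)
  have r183: "\<And>X13. X13 \<in> S \<Longrightarrow> (t b a) \<noteq> (t (t b a) a) \<or> (p (t b a) (t X13 (t b a))) = (p (t b a) (t X13 a))" by (metis r31 r63 cp ct abc)
  have r192: "\<And>X13. X13 \<in> S \<Longrightarrow> (t b a) \<noteq> (t b (t a a)) \<or> (p (t b a) (t X13 (t b a))) = (p (t b a) (t X13 a))" by (metis r183 ta cp ct abc)
  have r193: "\<And>X13. X13 \<in> S \<Longrightarrow> (t b a) \<noteq> (t b a) \<or> (p (t b a) (t X13 (t b a))) = (p (t b a) (t X13 a))" by (metis r192 ti cp ct abc)
  have r194: "\<And>X13. X13 \<in> S \<Longrightarrow> (p (t b a) (t X13 (t b a))) = (p (t b a) (t X13 a))" by (metis r193 cp ct abc)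
  have r195: "\<And>X13. X13 \<in> S \<Longrightarrow> (p (t b a) (t X13 (t b a))) = (t (p b X13) a)" by (metis r194 dr cp ct abc)
  have r243: "\<And>X4 X5 X6 X7. X4 \<in> S \<Longrightarrow> X5 \<in> S \<Longrightarrow> X6 \<in> S \<Longrightarrow> X7 \<in> S \<Longrightarrow> (t X4 X5) \<noteq> (t X4 (t X5 (t X6 (t X4 X5)))) \<or> (p (t X4 X5) (t (t X4 X5) X7)) = (p (t X4 X5) (t (t X4 X5) (t X6 X7)))" by (metis r33 ta cp ct abc)
  have r295: "\<And>X4 X5 X6 X7. X4 \<in> S \<Longrightarrow> X5 \<in> S \<Longrightarrow> X6 \<in> S \<Longrightarrow> X7 \<in> S \<Longrightarrow> (p (t X4 X5) (t (t X4 X5) X7)) = (p (t X4 X5) (t X4 (t X5 (t X6 X7)))) \<or> (t X4 X5) \<noteq> (t X4 (t X5 (t X6 (t X4 X5))))" by (metis r243 ta cp ct abc)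
  have r296: "\<And>X4 X5 X6 X7. X4 \<in> S \<Longrightarrow> X5 \<in> S \<Longrightarrow> X6 \<in> S \<Longrightarrow> X7 \<in> S \<Longrightarrow> (p (t X4 X5) (t X4 (t X5 (t X6 X7)))) = (p (t X4 X5) (t X4 (t X5 X7))) \<or> (t X4 X5) \<noteq> (t X4 (t X5 (t X6 (t X4 X5))))" by (metis r295 ta cp ct abc)
  have r297: "\<And>X4 X5 X6 X7. X4 \<in> S \<Longrightarrow> X5 \<in> S \<Longrightarrow> X6 \<in> S \<Longrightarrow> X7 \<in> S \<Longrightarrow> (t X4 X5) \<noteq> (t X4 (t X5 (t X6 (t X4 X5)))) \<or> (p (t X4 X5) (t X4 (t X5 (t X6 X7)))) = (t X4 (p X5 (t X5 X7)))" by (metis r296 dl cp ct abc)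
  have r427: "\<And>X6 X7 X8 X9. X6 \<in> S \<Longrightarrow> X7 \<in> S \<Longrightarrow> X8 \<in> S \<Longrightarrow> X9 \<in> S \<Longrightarrow> (p X6 (p (t X6 (t X7 (t X8 X6))) X9)) = (p X6 X9)" by (metis pa r69 cp ct abc)
  have r447: "\<And>X0 X1 X2. X0 \<in> S \<Longrightarrow> X1 \<in> S \<Longrightarrow> X2 \<in> S \<Longrightarrow> (t X0 (t (p X0 X1) X2)) = (t (p X0 (t X0 X1)) X2)" by (metis ta r79 cp ct abc)
  have r451: "\<And>X12 X13 X14. X12 \<in> S \<Longrightarrow> X13 \<in> S \<Longrightarrow> X14 \<in> S \<Longrightarrow> (t (p X12 X14) (p X12 X13)) = (p (p X12 (t X12 X13)) (t X14 (p X12 X13)))" by (metis dr r79 cp ct abc)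
  have r540: "\<And>X3 X4 X5. X3 \<in> S \<Longrightarrow> X4 \<in> S \<Longrightarrow> X5 \<in> S \<Longrightarrow> (t (p X3 X4) (p X3 X5)) = (p (p X3 (t X4 X3)) (t (p X3 X4) X5))" by (metis dl r109 cp ct abc)
  have r545: "\<And>X17 X18 X19. X17 \<in> S \<Longrightarrow> X18 \<in> S \<Longrightarrow> X19 \<in> S \<Longrightarrow> (t X17 (p X17 (t X18 X17))) \<noteq> X17 \<or> (p X17 (t X19 X17)) = (p X17 (t X19 (p X17 (t X18 X17))))" by (metis r31 r109 cp ct abc)
  have r547: "\<And>X23 X24. X23 \<in> S \<Longrightarrow> X24 \<in> S \<Longrightarrow> (p X23 (t X24 X23)) = (t (p X23 X24) (p X23 (t X24 X23)))" by (metis r59 r109 cp ct abc)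
  have r571: "\<And>X17 X18 X19. X17 \<in> S \<Longrightarrow> X18 \<in> S \<Longrightarrow> X19 \<in> S \<Longrightarrow> (p X17 (t X17 (t X18 X17))) \<noteq> X17 \<or> (p X17 (t X19 X17)) = (p X17 (t X19 (p X17 (t X18 X17))))" by (metis r545 r79 cp ct abc)
  have r572: "\<And>X17 X18 X19. X17 \<in> S \<Longrightarrow> X18 \<in> S \<Longrightarrow> X19 \<in> S \<Longrightarrow> (p X17 (t X19 X17)) = (p X17 (t X19 (p X17 (t X18 X17))))" by (metis r571 r29 cp ct abc)
  have r590: "\<And>X7 X8 X9. X7 \<in> S \<Longrightarrow> X8 \<in> S \<Longrightarrow> X9 \<in> S \<Longrightarrow> (t (p X7 X8) (p X9 X8)) = (p (t (p X7 X8) X9) (p (t X7 X8) X8))" by (metis dl r115 cp ct abc)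
  have r596: "\<And>X24 X25. X24 \<in> S \<Longrightarrow> X25 \<in> S \<Longrightarrow> (p (t X24 X25) X25) = (t (p X24 X25) (p (t X24 X25) X25))" by (metis r59 r115 cp ct abc)
  have r1316: "\<And>X0 X1 X2. X0 \<in> S \<Longrightarrow> X1 \<in> S \<Longrightarrow> X2 \<in> S \<Longrightarrow> (p X0 (t X0 X2)) = (p X0 (t X0 (p (t X1 X0) X2)))" by (metis r41 dl cp ct abc)
  have r1330: "\<And>X17 X18 X19. X17 \<in> S \<Longrightarrow> X18 \<in> S \<Longrightarrow> X19 \<in> S \<Longrightarrow> (p (t (p (t X17 (t X18 X17)) X19) X17) (p (t X17 (t X18 X17)) X19)) = (t (p (t X17 (t X18 X17)) X19) (p X17 X19))" by (metis r84 r41 cp ct abc)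
  have r2328: "\<And>X8 X9 X10 X11. X8 \<in> S \<Longrightarrow> X9 \<in> S \<Longrightarrow> X10 \<in> S \<Longrightarrow> X11 \<in> S \<Longrightarrow> (p (t X8 (p X11 X9)) (t X10 X9)) = (p (t X8 X11) (t (p X8 X10) X9))" by (metis r92 dr cp ct abc)
  have r2635: "\<And>X0 X1 X2. X0 \<in> S \<Longrightarrow> X1 \<in> S \<Longrightarrow> X2 \<in> S \<Longrightarrow> (t (p (t X1 X0) X2) X0) = (p (t X1 X0) (t X2 X0))" by (metis r112 ti cp ct abc)
  have r2640: "\<And>X19 X20 X21 X22. X19 \<in> S \<Longrightarrow> X20 \<in> S \<Longrightarrow> X21 \<in> S \<Longrightarrow> X22 \<in> S \<Longrightarrow> (t (p (t X21 (p X19 X20)) X22) X19) = (p (t X21 (p X19 (t X20 X19))) (t X22 X19))" by (metis r112 r109 cp ct abc)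
  have r2737: "\<And>X0 X1 X2. X0 \<in> S \<Longrightarrow> X1 \<in> S \<Longrightarrow> X2 \<in> S \<Longrightarrow> (t (p (t X1 X0) X2) X0) = (t (p X1 X2) X0)" by (metis r2635 dr cp ct abc)
  have r2904: "\<And>X0 X1 X2. X0 \<in> S \<Longrightarrow> X1 \<in> S \<Longrightarrow> X2 \<in> S \<Longrightarrow> (p (t X1 X0) (t X2 X0)) = (t (p X1 (t X2 X0)) X0)" by (metis r118 ti cp ct abc)
  have r2954: "\<And>X0 X1 X2. X0 \<in> S \<Longrightarrow> X1 \<in> S \<Longrightarrow> X2 \<in> S \<Longrightarrow> (t X0 (p X1 (t X2 X1))) = (t (p X0 (t X0 X2)) X1)" by (metis r118 dl cp ct abc)
  have r2998: "\<And>X0 X1 X2. X0 \<in> S \<Longrightarrow> X1 \<in> S \<Longrightarrow> X2 \<in> S \<Longrightarrow> (t (p X1 X2) X0) = (t (p X1 (t X2 X0)) X0)" by (metis r2904 dr cp ct abc)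
  have r3510: "\<And>X19 X20 X21 X22. X19 \<in> S \<Longrightarrow> X20 \<in> S \<Longrightarrow> X21 \<in> S \<Longrightarrow> X22 \<in> S \<Longrightarrow> (t X21 (t (p X19 X20) (p X19 X22))) = (p (t X21 (p X19 (t X20 X19))) (t X21 (t (p X19 X20) X22)))" by (metis r96 r109 cp ct abc)
  have r4630: "\<And>X3 X4 X5. X3 \<in> S \<Longrightarrow> X4 \<in> S \<Longrightarrow> X5 \<in> S \<Longrightarrow> (t X4 (t X3 X4)) \<noteq> (t X4 (t (t X3 X4) (t X3 X4))) \<or> (p (t X4 (t X3 X4)) (t X4 (t (t X3 X4) (t X3 X5)))) = (t X4 (p (t X3 X4) (t (t X3 X4) X5)))" by (metis r297 r65 cp ct abc)
  have r4867: "\<And>X3 X4 X5. X3 \<in> S \<Longrightarrow> X4 \<in> S \<Longrightarrow> X5 \<in> S \<Longrightarrow> (t X4 (t X3 X4)) \<noteq> (t X4 (t X3 (t X4 (t X3 X4)))) \<or> (p (t X4 (t X3 X4)) (t X4 (t (t X3 X4) (t X3 X5)))) = (t X4 (p (t X3 X4) (t (t X3 X4) X5)))" by (metis r4630 ta cp ct abc)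
  have r4868: "\<And>X3 X4 X5. X3 \<in> S \<Longrightarrow> X4 \<in> S \<Longrightarrow> X5 \<in> S \<Longrightarrow> (p (t X4 (t X3 X4)) (t X4 (t (t X3 X4) (t X3 X5)))) = (t X4 (p (t X3 X4) (t (t X3 X4) X5)))" by (metis r4867 r145 cp ct abc)
  have r4869: "\<And>X3 X4 X5. X3 \<in> S \<Longrightarrow> X4 \<in> S \<Longrightarrow> X5 \<in> S \<Longrightarrow> (p (t X4 (t X3 X4)) (t X4 (t (t X3 X4) (t X3 X5)))) = (t X4 (p (t X3 X4) (t X3 (t X4 X5))))" by (metis r4868 ta cp ct abc)
  have r4870: "\<And>X3 X4 X5. X3 \<in> S \<Longrightarrow> X4 \<in> S \<Longrightarrow> X5 \<in> S \<Longrightarrow> (p (t X4 (t X3 X4)) (t X4 (t (t X3 X4) (t X3 X5)))) = (t X4 (t X3 (p X4 (t X4 X5))))" by (metis r4869 dl cp ct abc)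
  have r4871: "\<And>X3 X4 X5. X3 \<in> S \<Longrightarrow> X4 \<in> S \<Longrightarrow> X5 \<in> S \<Longrightarrow> (t X4 (t X3 (p X4 (t X4 X5)))) = (p (t X4 (t X3 X4)) (t X4 (t X3 (t X4 (t X3 X5)))))" by (metis r4870 ta cp ct abc)
  have r4872: "\<And>X3 X4 X5. X3 \<in> S \<Longrightarrow> X4 \<in> S \<Longrightarrow> X5 \<in> S \<Longrightarrow> (t X4 (t X3 (p X4 (t X4 X5)))) = (p (t X4 (t X3 X4)) (t X4 (t X3 X5)))" by (metis r4871 r145 cp ct abc)
  have r4873: "\<And>X3 X4 X5. X3 \<in> S \<Longrightarrow> X4 \<in> S \<Longrightarrow> X5 \<in> S \<Longrightarrow> (t X4 (t X3 (p X4 (t X4 X5)))) = (t X4 (t X3 (p X4 X5)))" by (metis r4872 r96 cp ct abc)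
  have r5906: "\<And>X21 X22 X23 X24. X21 \<in> S \<Longrightarrow> X22 \<in> S \<Longrightarrow> X23 \<in> S \<Longrightarrow> X24 \<in> S \<Longrightarrow> (t X21 (p (t X22 X23) (t X24 X23))) = (t X21 (t (p (t X21 X22) X24) X23))" by (metis r148 r112 cp ct abc)
  have r6053: "\<And>X21 X22 X23 X24. X21 \<in> S \<Longrightarrow> X22 \<in> S \<Longrightarrow> X23 \<in> S \<Longrightarrow> X24 \<in> S \<Longrightarrow> (t X21 (t (p (t X21 X22) X24) X23)) = (t X21 (t (p X22 X24) X23))" by (metis r5906 dr cp ct abc)
  have r6410: "\<And>X17 X18 X19. X17 \<in> S \<Longrightarrow> X18 \<in> S \<Longrightarrow> X19 \<in> S \<Longrightarrow> (t X19 (p (t X17 X18) X18)) = (t X19 (t (p X17 X19) X18))" by (metis r149 dr cp ct abc)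
  have r10612: "\<And>X8 X9 X10. X8 \<in> S \<Longrightarrow> X9 \<in> S \<Longrightarrow> X10 \<in> S \<Longrightarrow> (t (p X8 X10) (p X8 X9)) = (t (p (p X8 (t X8 X9)) X10) (p X8 X9))" by (metis r2737 r79 cp ct abc)
  have r10637: "\<And>X78 X79 X80 X81. X78 \<in> S \<Longrightarrow> X79 \<in> S \<Longrightarrow> X80 \<in> S \<Longrightarrow> X81 \<in> S \<Longrightarrow> (t (p (t X78 X79) X81) X80) = (t (p (t X78 (t X79 X80)) X81) X80)" by (metis r2737 ta cp ct abc)
  have r10662: "\<And>X13 X14 X15 X16. X13 \<in> S \<Longrightarrow> X14 \<in> S \<Longrightarrow> X15 \<in> S \<Longrightarrow> X16 \<in> S \<Longrightarrow> (t (p X13 (p (t X13 X15) X16)) X14) = (t (p (t X13 (p X14 X15)) X16) X14)" by (metis r2737 r92 cp ct abc)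
  have r10666: "\<And>X29 X30. X29 \<in> S \<Longrightarrow> X30 \<in> S \<Longrightarrow> (t (p X29 (t X29 X30)) X30) = (t (t X29 X30) X30)" by (metis r2737 pi cp ct abc)
  have r10750: "\<And>X8 X9 X10. X8 \<in> S \<Longrightarrow> X9 \<in> S \<Longrightarrow> X10 \<in> S \<Longrightarrow> (t (p X8 X10) (p X8 X9)) = (t (p X8 (p (t X8 X9) X10)) (p X8 X9))" by (metis r10612 pa cp ct abc)
  have r10801: "\<And>X17 X18 X19. X17 \<in> S \<Longrightarrow> X18 \<in> S \<Longrightarrow> X19 \<in> S \<Longrightarrow> (t (p (t X17 (t X18 X17)) X19) (p X17 X19)) = (p (t (p (t X17 X18) X19) X17) (p (t X17 (t X18 X17)) X19))" by (metis r1330 r10637 cp ct abc)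
  have r10843: "\<And>X29 X30. X29 \<in> S \<Longrightarrow> X30 \<in> S \<Longrightarrow> (t (p X29 (t X29 X30)) X30) = (t X29 (t X30 X30))" by (metis r10666 ta cp ct abc)
  have r10844: "\<And>X29 X30. X29 \<in> S \<Longrightarrow> X30 \<in> S \<Longrightarrow> (t X29 X30) = (t (p X29 (t X29 X30)) X30)" by (metis r10843 ti cp ct abc)
  have r10984: "\<And>X15 X16. X15 \<in> S \<Longrightarrow> X16 \<in> S \<Longrightarrow> (t (p (t X15 X16) X15) X16) = (t (t X15 X16) X16)" by (metis r2998 pi cp ct abc)
  have r11116: "\<And>X15 X16. X15 \<in> S \<Longrightarrow> X16 \<in> S \<Longrightarrow> (t (p (t X15 X16) X15) X16) = (t X15 (t X16 X16))" by (metis r10984 ta cp ct abc)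
  have r11117: "\<And>X15 X16. X15 \<in> S \<Longrightarrow> X16 \<in> S \<Longrightarrow> (t X15 X16) = (t (p (t X15 X16) X15) X16)" by (metis r11116 ti cp ct abc)
  have r11742: "\<And>X16 X17. X16 \<in> S \<Longrightarrow> X17 \<in> S \<Longrightarrow> (p (t X16 X17) X16) = (t (p (p (t X16 X17) X16) X16) (p X17 X16))" by (metis r11117 r84 cp ct abc)
  have r11889: "\<And>X16 X17. X16 \<in> S \<Longrightarrow> X17 \<in> S \<Longrightarrow> (p (t X16 X17) X16) = (t (p (t X16 X17) (p X16 X16)) (p X17 X16))" by (metis r11742 pa cp ct abc)
  have r11890: "\<And>X16 X17. X16 \<in> S \<Longrightarrow> X17 \<in> S \<Longrightarrow> (p (t X16 X17) X16) = (t (p (t X16 X17) X16) (p X17 X16))" by (metis r11889 pi cp ct abc)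
  have r12412: "\<And>X15. X15 \<in> S \<Longrightarrow> (t X15 (p (t b a) (t b a))) = (t X15 (t (p b X15) a))" by (metis r149 r195 cp ct abc)
  have r12465: "\<And>X15. X15 \<in> S \<Longrightarrow> (t X15 (p (t b a) (t b a))) = (t X15 (p (t b a) a))" by (metis r12412 r6410 cp ct abc)
  have r12466: "\<And>X15. X15 \<in> S \<Longrightarrow> (t X15 (p (t b a) a)) = (t X15 (t b (p a a)))" by (metis r12465 dl cp ct abc)
  have r12467: "\<And>X15. X15 \<in> S \<Longrightarrow> (t X15 (t b a)) = (t X15 (p (t b a) a))" by (metis r12466 pi cp ct abc)
  have r17343: "(t (t a b) (t b a)) = (p (t a (t b (t b a))) a)" by (metis r12467 r97 cp ct abc)
  have r17453: "(p (t a (t b a)) a) = (t (t a b) (t b a))" by (metis r17343 r59 cp ct abc)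
  have r17454: "(p a a) = (t (t a b) (t b a))" by (metis r17453 r63 cp ct abc)
  have r17455: "a = (t (t a b) (t b a))" by (metis r17454 pi cp ct abc)
  have r17856: "a = (t (p (t a b) a) (t b a))" by (metis r10844 r17455 cp ct abc)
  have r27494: "\<And>X8 X9 X10 X11. X8 \<in> S \<Longrightarrow> X9 \<in> S \<Longrightarrow> X10 \<in> S \<Longrightarrow> X11 \<in> S \<Longrightarrow> (p X8 (t X8 X11)) = (p X8 (t X8 (p (t X9 (t X10 X8)) X11)))" by (metis r427 dl cp ct abc)
  have r28272: "\<And>X120 X121 X122 X123 X124. X120 \<in> S \<Longrightarrow> X121 \<in> S \<Longrightarrow> X122 \<in> S \<Longrightarrow> X123 \<in> S \<Longrightarrow> X124 \<in> S \<Longrightarrow> (t (p (t X123 (p X120 (t X120 X121))) X124) X122) = (p (t X123 (t X120 (t (p X120 X121) X122))) (t X124 X122))" by (metis r112 r447 cp ct abc)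
  have r35081: "\<And>X12 X13 X14. X12 \<in> S \<Longrightarrow> X13 \<in> S \<Longrightarrow> X14 \<in> S \<Longrightarrow> (t X13 (p X12 (p X12 (t X14 X12)))) = (t X13 (p X12 (t X13 X12)))" by (metis r149 r572 cp ct abc)
  have r35474: "\<And>X12 X13 X14. X12 \<in> S \<Longrightarrow> X13 \<in> S \<Longrightarrow> X14 \<in> S \<Longrightarrow> (t X13 (p X12 (p X12 (t X14 X12)))) = (t X13 (p X12 X12))" by (metis r35081 r149 cp ct abc)
  have r35475: "\<And>X12 X13 X14. X12 \<in> S \<Longrightarrow> X13 \<in> S \<Longrightarrow> X14 \<in> S \<Longrightarrow> (t X13 X12) = (t X13 (p X12 (p X12 (t X14 X12))))" by (metis r35474 pi cp ct abc)
  have r35476: "\<And>X12 X13 X14. X12 \<in> S \<Longrightarrow> X13 \<in> S \<Longrightarrow> X14 \<in> S \<Longrightarrow> (t X13 X12) = (t X13 (p X12 (t X14 X12)))" by (metis r35475 r40 cp ct abc)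
  have r35479: "\<And>X19 X20 X21 X22. X19 \<in> S \<Longrightarrow> X20 \<in> S \<Longrightarrow> X21 \<in> S \<Longrightarrow> X22 \<in> S \<Longrightarrow> (t (p (t X21 (p X19 X20)) X22) X19) = (p (t X21 X19) (t X22 X19))" by (metis r2640 r35476 cp ct abc)
  have r35481: "\<And>X0 X1 X2. X0 \<in> S \<Longrightarrow> X1 \<in> S \<Longrightarrow> X2 \<in> S \<Longrightarrow> (t X0 X1) = (t (p X0 (t X0 X2)) X1)" by (metis r2954 r35476 cp ct abc)
  have r35482: "\<And>X19 X20 X21 X22. X19 \<in> S \<Longrightarrow> X20 \<in> S \<Longrightarrow> X21 \<in> S \<Longrightarrow> X22 \<in> S \<Longrightarrow> (t X21 (t (p X19 X20) (p X19 X22))) = (p (t X21 X19) (t X21 (t (p X19 X20) X22)))" by (metis r3510 r35476 cp ct abc)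
  have r35636: "\<And>X19 X20 X21 X22. X19 \<in> S \<Longrightarrow> X20 \<in> S \<Longrightarrow> X21 \<in> S \<Longrightarrow> X22 \<in> S \<Longrightarrow> (t (p (t X21 (p X19 X20)) X22) X19) = (t (p X21 X22) X19)" by (metis r35479 dr cp ct abc)
  have r35638: "\<And>X13 X14 X15 X16. X13 \<in> S \<Longrightarrow> X14 \<in> S \<Longrightarrow> X15 \<in> S \<Longrightarrow> X16 \<in> S \<Longrightarrow> (t (p X13 (p (t X13 X15) X16)) X14) = (t (p X13 X16) X14)" by (metis r10662 r35636 cp ct abc)
  have r35757: "\<And>X0 X1 X2. X0 \<in> S \<Longrightarrow> X1 \<in> S \<Longrightarrow> X2 \<in> S \<Longrightarrow> (t X0 X2) = (t X0 (t (p X0 X1) X2))" by (metis r447 r35481 cp ct abc)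
  have r35790: "\<And>X120 X121 X122 X123 X124. X120 \<in> S \<Longrightarrow> X121 \<in> S \<Longrightarrow> X122 \<in> S \<Longrightarrow> X123 \<in> S \<Longrightarrow> X124 \<in> S \<Longrightarrow> (t (p (t X123 (p X120 (t X120 X121))) X124) X122) = (p (t X123 (t X120 X122)) (t X124 X122))" by (metis r28272 r35757 cp ct abc)
  have r35998: "\<And>X120 X121 X122 X123 X124. X120 \<in> S \<Longrightarrow> X121 \<in> S \<Longrightarrow> X122 \<in> S \<Longrightarrow> X123 \<in> S \<Longrightarrow> X124 \<in> S \<Longrightarrow> (t (p (t X123 (p X120 (t X120 X121))) X124) X122) = (t (p (t X123 X120) X124) X122)" by (metis r35790 r112 cp ct abc)
  have r36350: "\<And>X19 X20 X21 X22. X19 \<in> S \<Longrightarrow> X20 \<in> S \<Longrightarrow> X21 \<in> S \<Longrightarrow> X22 \<in> S \<Longrightarrow> (t X21 (t (p X19 X20) (p X19 X22))) = (t X21 (p X19 (t (p X19 X20) X22)))" by (metis r35482 dl cp ct abc)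
  have r209155: "\<And>X107 X108 X109 X110. X107 \<in> S \<Longrightarrow> X108 \<in> S \<Longrightarrow> X109 \<in> S \<Longrightarrow> X110 \<in> S \<Longrightarrow> (t X108 (t (p (t X107 (p X108 (t X108 X109))) X110) (p X108 X109))) = (t X108 (t (p X107 X110) (p X108 (t X108 X109))))" by (metis r4873 r2737 cp ct abc)
  have r210258: "\<And>X107 X108 X109 X110. X107 \<in> S \<Longrightarrow> X108 \<in> S \<Longrightarrow> X109 \<in> S \<Longrightarrow> X110 \<in> S \<Longrightarrow> (t X108 (t (p (t X107 (p X108 (t X108 X109))) X110) (p X108 X109))) = (t X108 (t (p X107 X110) (p X108 X109)))" by (metis r209155 r4873 cp ct abc)
  have r210259: "\<And>X107 X108 X109 X110. X107 \<in> S \<Longrightarrow> X108 \<in> S \<Longrightarrow> X109 \<in> S \<Longrightarrow> X110 \<in> S \<Longrightarrow> (t X108 (t (p X107 X110) (p X108 X109))) = (t X108 (t (p (t X107 X108) X110) (p X108 X109)))" by (metis r210258 r35998 cp ct abc)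
  have r285205: "\<And>X15 X16. X15 \<in> S \<Longrightarrow> X16 \<in> S \<Longrightarrow> (t (p X16 X15) (p X16 X15)) = (p (p X16 (t X16 X15)) (p (t X15 X16) X15))" by (metis r451 r84 cp ct abc)
  have r285309: "\<And>X239. X239 \<in> S \<Longrightarrow> (t (p X239 a) (p X239 (t b a))) = (p (p X239 (t X239 (t b a))) (p (t a X239) a))" by (metis r451 r88 cp ct abc)
  have r285359: "\<And>X72 X73 X74. X72 \<in> S \<Longrightarrow> X73 \<in> S \<Longrightarrow> X74 \<in> S \<Longrightarrow> (t (p (p X72 (t X72 X73)) X74) (p X72 X73)) = (t (t (p X72 X74) (p X72 X73)) (p X72 X73))" by (metis r2998 r451 cp ct abc)
  have r286417: "\<And>X15 X16. X15 \<in> S \<Longrightarrow> X16 \<in> S \<Longrightarrow> (p X16 X15) = (p (p X16 (t X16 X15)) (p (t X15 X16) X15))" by (metis r285205 ti cp ct abc)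
  have r286919: "\<And>X72 X73 X74. X72 \<in> S \<Longrightarrow> X73 \<in> S \<Longrightarrow> X74 \<in> S \<Longrightarrow> (t (p (p X72 (t X72 X73)) X74) (p X72 X73)) = (t (p X72 X74) (t (p X72 X73) (p X72 X73)))" by (metis r285359 ta cp ct abc)
  have r286920: "\<And>X72 X73 X74. X72 \<in> S \<Longrightarrow> X73 \<in> S \<Longrightarrow> X74 \<in> S \<Longrightarrow> (t (p (p X72 (t X72 X73)) X74) (p X72 X73)) = (t (p X72 X74) (p X72 (t (p X72 X73) X73)))" by (metis r286919 r36350 cp ct abc)
  have r286921: "\<And>X72 X73 X74. X72 \<in> S \<Longrightarrow> X73 \<in> S \<Longrightarrow> X74 \<in> S \<Longrightarrow> (t (p (p X72 (t X72 X73)) X74) (p X72 X73)) = (t (p X72 X74) (p X72 (p (t X72 X73) X73)))" by (metis r286920 r115 cp ct abc)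
  have r286922: "\<And>X72 X73 X74. X72 \<in> S \<Longrightarrow> X73 \<in> S \<Longrightarrow> X74 \<in> S \<Longrightarrow> (t (p X72 X74) (p X72 (p (t X72 X73) X73))) = (t (p X72 (p (t X72 X73) X74)) (p X72 X73))" by (metis r286921 pa cp ct abc)
  have r286923: "\<And>X72 X73 X74. X72 \<in> S \<Longrightarrow> X73 \<in> S \<Longrightarrow> X74 \<in> S \<Longrightarrow> (t (p X72 X74) (p X72 X73)) = (t (p X72 X74) (p X72 (p (t X72 X73) X73)))" by (metis r286922 r10750 cp ct abc)
  have r303010: "\<And>X9 X10. X9 \<in> S \<Longrightarrow> X10 \<in> S \<Longrightarrow> (t (p X9 X10) (p X9 (p (t X9 X10) X10))) = (p (p X9 (t X10 X9)) (p (t X9 X10) X10))" by (metis r540 r596 cp ct abc)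
  have r304350: "\<And>X9 X10. X9 \<in> S \<Longrightarrow> X10 \<in> S \<Longrightarrow> (t (p X9 X10) (p X9 (p (t X9 X10) X10))) = (p X9 (p (t X10 X9) (p (t X9 X10) X10)))" by (metis r303010 pa cp ct abc)
  have r304351: "\<And>X9 X10. X9 \<in> S \<Longrightarrow> X10 \<in> S \<Longrightarrow> (t (p X9 X10) (p X9 X10)) = (p X9 (p (t X10 X9) (p (t X9 X10) X10)))" by (metis r304350 r286923 cp ct abc)
  have r304352: "\<And>X9 X10. X9 \<in> S \<Longrightarrow> X10 \<in> S \<Longrightarrow> (p X9 X10) = (p X9 (p (t X10 X9) (p (t X9 X10) X10)))" by (metis r304351 ti cp ct abc)
  have r313778: "\<And>X4 X5. X4 \<in> S \<Longrightarrow> X5 \<in> S \<Longrightarrow> (t (p X4 X5) (p (p X4 (t X5 X4)) X5)) = (p (p X4 (t X5 X4)) (p (t X4 X5) X5))" by (metis r590 r547 cp ct abc)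
  have r313820: "\<And>X99 X100. X99 \<in> S \<Longrightarrow> X100 \<in> S \<Longrightarrow> (t (p (t X99 X100) X99) (p X100 X99)) = (p (t X99 X100) (p (t (t X99 X100) X99) X99))" by (metis r590 r11117 cp ct abc)
  have r314128: "\<And>X66 X67 X68. X66 \<in> S \<Longrightarrow> X67 \<in> S \<Longrightarrow> X68 \<in> S \<Longrightarrow> (p X68 (t X68 (p (t X66 X67) X67))) = (p X68 (t X68 (t (p X66 X67) (p X68 X67))))" by (metis r1316 r590 cp ct abc)
  have r314783: "\<And>X4 X5. X4 \<in> S \<Longrightarrow> X5 \<in> S \<Longrightarrow> (t (p X4 X5) (p (p X4 (t X5 X4)) X5)) = (p X4 (p (t X5 X4) (p (t X4 X5) X5)))" by (metis r313778 pa cp ct abc)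
  have r314784: "\<And>X4 X5. X4 \<in> S \<Longrightarrow> X5 \<in> S \<Longrightarrow> (p X4 X5) = (t (p X4 X5) (p (p X4 (t X5 X4)) X5))" by (metis r314783 r304352 cp ct abc)
  have r314785: "\<And>X4 X5. X4 \<in> S \<Longrightarrow> X5 \<in> S \<Longrightarrow> (p X4 X5) = (t (p X4 X5) (p X4 (p (t X5 X4) X5)))" by (metis r314784 pa cp ct abc)
  have r314926: "\<And>X99 X100. X99 \<in> S \<Longrightarrow> X100 \<in> S \<Longrightarrow> (t (p (t X99 X100) X99) (p X100 X99)) = (p (t X99 X100) (p (t X99 (t X100 X99)) X99))" by (metis r313820 ta cp ct abc)
  have r314927: "\<And>X99 X100. X99 \<in> S \<Longrightarrow> X100 \<in> S \<Longrightarrow> (t (p (t X99 X100) X99) (p X100 X99)) = (p (t X99 (p X100 (t X100 X99))) X99)" by (metis r314926 r92 cp ct abc)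
  have r314928: "\<And>X99 X100. X99 \<in> S \<Longrightarrow> X100 \<in> S \<Longrightarrow> (p (t X99 X100) X99) = (p (t X99 (p X100 (t X100 X99))) X99)" by (metis r314927 r11890 cp ct abc)
  have r322312: "\<And>X0 X1 X2. X0 \<in> S \<Longrightarrow> X1 \<in> S \<Longrightarrow> X2 \<in> S \<Longrightarrow> (p (t X0 X0) (t (p X0 X2) X1)) = (p (p X0 (t X0 X1)) (t X2 X1))" by (metis r2328 r79 cp ct abc)
  have r323350: "\<And>X0 X1 X2. X0 \<in> S \<Longrightarrow> X1 \<in> S \<Longrightarrow> X2 \<in> S \<Longrightarrow> (p X0 (t (p X0 X2) X1)) = (p (p X0 (t X0 X1)) (t X2 X1))" by (metis r322312 ti cp ct abc)
  have r352805: "(p c a) \<noteq> (t (p c a) (p c (t (p c b) a)))" by (metis r153 r36350 cp ct abc)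
  have r918860: "\<And>X61 X62 X63. X61 \<in> S \<Longrightarrow> X62 \<in> S \<Longrightarrow> X63 \<in> S \<Longrightarrow> (p X61 (t X61 (p (t X61 (t X62 X61)) X63))) = (p X61 (t X61 (t (p (t X61 (t X62 X61)) X63) (p X61 X63))))" by (metis r1316 r10801 cp ct abc)
  have r923660: "\<And>X61 X62 X63. X61 \<in> S \<Longrightarrow> X62 \<in> S \<Longrightarrow> X63 \<in> S \<Longrightarrow> (p X61 (t X61 (p (t X61 (t X62 X61)) X63))) = (p X61 (t X61 (t (p (t X62 X61) X63) (p X61 X63))))" by (metis r918860 r6053 cp ct abc)
  have r923661: "\<And>X61 X62 X63. X61 \<in> S \<Longrightarrow> X62 \<in> S \<Longrightarrow> X63 \<in> S \<Longrightarrow> (p X61 (t X61 (p (t X61 (t X62 X61)) X63))) = (p X61 (t X61 (t (p X62 X63) (p X61 X63))))" by (metis r923660 r210259 cp ct abc)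
  have r923662: "\<And>X61 X62 X63. X61 \<in> S \<Longrightarrow> X62 \<in> S \<Longrightarrow> X63 \<in> S \<Longrightarrow> (p X61 (t X61 X63)) = (p X61 (t X61 (t (p X62 X63) (p X61 X63))))" by (metis r923661 r27494 cp ct abc)
  have r923663: "\<And>X66 X67 X68. X66 \<in> S \<Longrightarrow> X67 \<in> S \<Longrightarrow> X68 \<in> S \<Longrightarrow> (p X68 (t X68 (p (t X66 X67) X67))) = (p X68 (t X68 X67))" by (metis r314128 r923662 cp ct abc)
  have r1163323: "\<And>X5 X6. X5 \<in> S \<Longrightarrow> X6 \<in> S \<Longrightarrow> (p X5 X6) = (p X5 (p (t X5 X6) (p (t X6 X5) X6)))" by (metis r286417 pa cp ct abc)
  have r1214107: "\<And>X263. X263 \<in> S \<Longrightarrow> (p X263 (t X263 (t b a))) = (p X263 (t X263 (p a (t b a))))" by (metis r923663 r17856 cp ct abc)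
  have r1214617: "\<And>X263. X263 \<in> S \<Longrightarrow> (p X263 (t X263 (t b a))) = (p X263 (t X263 a))" by (metis r1214107 r35476 cp ct abc)
  have r1214630: "\<And>X239. X239 \<in> S \<Longrightarrow> (t (p X239 a) (p X239 (t b a))) = (p (p X239 (t X239 a)) (p (t a X239) a))" by (metis r285309 r1214617 cp ct abc)
  have r1214646: "\<And>X239. X239 \<in> S \<Longrightarrow> (p X239 a) = (t (p X239 a) (p X239 (t b a)))" by (metis r1214630 r286417 cp ct abc)
  have r1557439: "\<And>X11 X12 X13. X11 \<in> S \<Longrightarrow> X12 \<in> S \<Longrightarrow> X13 \<in> S \<Longrightarrow> (t (p X11 X12) X13) = (t (p X11 (p (t X12 X11) X12)) X13)" by (metis r35638 r1163323 cp ct abc)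
  have r1880965: "\<And>X89 X90. X89 \<in> S \<Longrightarrow> X90 \<in> S \<Longrightarrow> (p X89 (p (t X90 X89) X90)) = (t (p X89 X90) (p X89 (p (t X90 X89) X90)))" by (metis r1557439 ti cp ct abc)
  have r1881800: "\<And>X89 X90. X89 \<in> S \<Longrightarrow> X90 \<in> S \<Longrightarrow> (p X89 X90) = (p X89 (p (t X90 X89) X90))" by (metis r1880965 r314785 cp ct abc)
  have r1882339: "\<And>X4 X5. X4 \<in> S \<Longrightarrow> X5 \<in> S \<Longrightarrow> (p (p X5 (t X5 X4)) X4) = (p (p X5 (t X5 X4)) (p (t X4 X5) X4))" by (metis r1881800 r314928 cp ct abc)
  have r1883285: "\<And>X4 X5. X4 \<in> S \<Longrightarrow> X5 \<in> S \<Longrightarrow> (p X5 X4) = (p (p X5 (t X5 X4)) X4)" by (metis r1882339 r286417 cp ct abc)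
  have r1884198: "\<And>X18. X18 \<in> S \<Longrightarrow> (p X18 (t b a)) = (p (p X18 (t X18 a)) (t b a))" by (metis r1883285 r1214617 cp ct abc)
  have r2108443: "\<And>X1. X1 \<in> S \<Longrightarrow> (p X1 (t b a)) = (p X1 (t (p X1 b) a))" by (metis r1884198 r323350 cp ct abc)
  have r2108465: "(p c a) \<noteq> (t (p c a) (p c (t b a)))" by (metis r352805 r2108443 cp ct abc)
  show False using r2108465 r1214646 by (blast | metis cp ct abc)
qed

lemma LL: assumes "a \<in> S" "b \<in> S" "c \<in> S" and h: "t (t a b) a = a" and h2: "t (t b a) b = b"
  shows "t (t (p a c) (p b c)) (p a c) = p a c"
proof -
  define s where "s = p a c"
  have sS: "s \<in> S" using assms by (simp add: s_def cp)
  have sba: "t (t s b) a = t s a"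
  proof -
    have "t (t s b) a = t (p (t a b) (t c b)) a" using assms by (simp add: s_def dr)
    also have "\<dots> = p (t (t a b) a) (t (t c b) a)" using assms by (simp add: dr ct)
    also have "\<dots> = p a (t c a)" using assms h L by simp
    also have "\<dots> = t s a" using assms by (simp add: s_def dr ti)
    finally show ?thesis .
  qed
  have abs: "t a (t b s) = t a s"
  proof -
    have "t a (t b s) = t (t a b) (p a c)" using assms by (simp add: s_def ta cp)
    also have "\<dots> = p (t (t a b) a) (t (t a b) c)" using assms by (simp add: dl ct)
    also have "\<dots> = p a (t a c)" using assms h Ld by simp
    also have "\<dots> = t a s" using assms by (simp add: s_def dl ti)
    finally show ?thesis .
  qed
  have tb: "t s b \<in> S" "t b s \<in> S" "t s a \<in> S" "t a s \<in> S" "t b a \<in> S" using assms sS by (simp_all add: ct)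
  have sbs: "t (t s b) s = t (t s a) s"
  proof -
    have "t (t s b) s = t (t s (t (t b a) b)) s" by (simp only: h2)
    also have "\<dots> = t (t (t s b) a) (t b s)" using assms sS tb by (metis ta)
    also have "\<dots> = t (t s a) (t b s)" by (simp only: sba)
    also have "\<dots> = t s (t a (t b s))" using assms sS tb by (metis ta)
    also have "\<dots> = t s (t a s)" by (simp only: abs)
    also have "\<dots> = t (t s a) s" using assms sS tb by (metis ta)
    finally show ?thesis .
  qed
  have "t (t s (p b c)) s = p (t (t s b) s) (t (t s c) s)" using assms sS by (simp add: dl dr ct)
  also have "\<dots> = p (t (t s a) s) (t (t s c) s)" by (simp only: sbs)
  also have "\<dots> = t (t s (p a c)) s" using assms sS by (simp add: dl dr ct)
  also have "\<dots> = s" using sS by (simp add: s_def[symmetric] ti)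
  finally show ?thesis by (simp add: s_def)
qed

lemma Dtrans: assumes "a \<in> S" "b \<in> S" "c \<in> S" "t (t a b) a = a" "t (t b a) b = b" "t (t b c) b = b" "t (t c b) c = c"
  shows "t (t a c) a = a"
  by (smt (verit) assms ct ta ti)

lemma Dmr: assumes "a \<in> S" "b \<in> S" "c \<in> S" and h: "t (t a b) a = a" and h2: "t (t b a) b = b"
  shows "t (t (t a c) (t b c)) (t a c) = t a c"
proof (rule ccontr)
  assume neg: "\<not> ?thesis"
  note abc = assms(1-3)
  have d13: "(t a c) \<noteq> (t (t a (t c (t b c))) (t a c))" by (metis neg ta cp ct abc)
  have d14: "\<And>X0 X1. X0 \<in> S \<Longrightarrow> X1 \<in> S \<Longrightarrow> (t X0 X1) = (t X0 (t X0 X1))" by (metis ta ti cp ct abc)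
  have d18: "a = (t a (t b a))" by (metis ta h cp ct abc)
  have d20: "\<And>X3 X4. X3 \<in> S \<Longrightarrow> X4 \<in> S \<Longrightarrow> (t X3 X4) = (t X3 (t X4 (t X3 X4)))" by (metis ta ti cp ct abc)
  have d26: "\<And>X0. X0 \<in> S \<Longrightarrow> (t a (t (t b a) X0)) = (t a X0)" by (metis ta d18 cp ct abc)
  have d27: "\<And>X0. X0 \<in> S \<Longrightarrow> (t a X0) = (t a (t b (t a X0)))" by (metis d26 ta cp ct abc)
  have d28: "(t a c) \<noteq> (t a (t (t c (t b c)) (t a c)))" by (metis d13 ta cp ct abc)
  have d29: "(t a c) \<noteq> (t a (t c (t (t b c) (t a c))))" by (metis d28 ta cp ct abc)
  have d30: "(t a c) \<noteq> (t a (t c (t b (t c (t a c)))))" by (metis d29 ta cp ct abc)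
  have d40: "\<And>X2 X3 X4. X2 \<in> S \<Longrightarrow> X3 \<in> S \<Longrightarrow> X4 \<in> S \<Longrightarrow> (t (t X2 X3) X4) = (t X2 (t X3 (t (t X2 X3) X4)))" by (metis d14 ta cp ct abc)
  have d43: "\<And>X2 X3 X4. X2 \<in> S \<Longrightarrow> X3 \<in> S \<Longrightarrow> X4 \<in> S \<Longrightarrow> (t X2 (t X3 X4)) = (t X2 (t X3 (t X2 (t X3 X4))))" by (metis d40 ta cp ct abc)
  have d65: "\<And>X5 X6 X7. X5 \<in> S \<Longrightarrow> X6 \<in> S \<Longrightarrow> X7 \<in> S \<Longrightarrow> (t X5 (t X6 X7)) = (t (t X5 X6) (t X7 (t X5 (t X6 X7))))" by (metis d20 ta cp ct abc)
  have d75: "\<And>X1 X2 X3. X1 \<in> S \<Longrightarrow> X2 \<in> S \<Longrightarrow> X3 \<in> S \<Longrightarrow> (t X3 (t X1 X2)) = (t X3 (t X1 (t X2 (t X3 (t X1 X2)))))" by (metis d20 ta cp ct abc)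
  have d227: "\<And>X24. X24 \<in> S \<Longrightarrow> (t X24 a) = (t X24 (t (t a b) (t X24 a)))" by (metis d43 h cp ct abc)
  have d271: "\<And>X24. X24 \<in> S \<Longrightarrow> (t X24 a) = (t X24 (t a (t b (t X24 a))))" by (metis d227 ta cp ct abc)
  have d348: "\<And>X0 X1. X0 \<in> S \<Longrightarrow> X1 \<in> S \<Longrightarrow> (t X1 X0) = (t (t X1 X0) (t X0 (t X1 X0)))" by (metis d65 ti cp ct abc)
  have d351: "\<And>X8 X9 X10 X11. X8 \<in> S \<Longrightarrow> X9 \<in> S \<Longrightarrow> X10 \<in> S \<Longrightarrow> X11 \<in> S \<Longrightarrow> (t X11 (t X8 (t X9 X10))) = (t (t X11 X8) (t (t X9 (t X8 (t X9 X10))) (t X11 (t X8 (t X9 X10)))))" by (metis d65 d43 cp ct abc)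
  have d367: "\<And>X7 X8. X7 \<in> S \<Longrightarrow> X8 \<in> S \<Longrightarrow> (t X7 X8) = (t (t (t X7 X8) X7) (t X8 (t X7 X8)))" by (metis d65 ti cp ct abc)
  have d453: "\<And>X8 X9 X10 X11. X8 \<in> S \<Longrightarrow> X9 \<in> S \<Longrightarrow> X10 \<in> S \<Longrightarrow> X11 \<in> S \<Longrightarrow> (t X11 (t X8 (t X9 X10))) = (t (t X11 X8) (t X9 (t (t X8 (t X9 X10)) (t X11 (t X8 (t X9 X10))))))" by (metis d351 ta cp ct abc)
  have d454: "\<And>X8 X9 X10 X11. X8 \<in> S \<Longrightarrow> X9 \<in> S \<Longrightarrow> X10 \<in> S \<Longrightarrow> X11 \<in> S \<Longrightarrow> (t X11 (t X8 (t X9 X10))) = (t (t X11 X8) (t X9 (t X8 (t (t X9 X10) (t X11 (t X8 (t X9 X10)))))))" by (metis d453 ta cp ct abc)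
  have d455: "\<And>X8 X9 X10 X11. X8 \<in> S \<Longrightarrow> X9 \<in> S \<Longrightarrow> X10 \<in> S \<Longrightarrow> X11 \<in> S \<Longrightarrow> (t X11 (t X8 (t X9 X10))) = (t (t X11 X8) (t X9 (t X8 (t X9 (t X10 (t X11 (t X8 (t X9 X10))))))))" by (metis d454 ta cp ct abc)
  have d475: "\<And>X7 X8. X7 \<in> S \<Longrightarrow> X8 \<in> S \<Longrightarrow> (t X7 X8) = (t (t X7 (t X8 X7)) (t X8 (t X7 X8)))" by (metis d367 ta cp ct abc)
  have d609: "\<And>X57. X57 \<in> S \<Longrightarrow> (t a (t X57 (t b (t a X57)))) = (t a (t b (t a X57)))" by (metis d27 d75 cp ct abc)
  have d731: "\<And>X57. X57 \<in> S \<Longrightarrow> (t a X57) = (t a (t X57 (t b (t a X57))))" by (metis d609 d27 cp ct abc)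
  have d821: "\<And>X2. X2 \<in> S \<Longrightarrow> (t X2 a) = (t (t X2 a) (t (t b (t X2 a)) (t X2 a)))" by (metis d65 d271 cp ct abc)
  have d851: "\<And>X2. X2 \<in> S \<Longrightarrow> (t X2 a) = (t (t X2 a) (t b (t (t X2 a) (t X2 a))))" by (metis d821 ta cp ct abc)
  have d852: "\<And>X2. X2 \<in> S \<Longrightarrow> (t X2 a) = (t (t X2 a) (t b (t X2 (t a (t X2 a)))))" by (metis d851 ta cp ct abc)
  have d853: "\<And>X2. X2 \<in> S \<Longrightarrow> (t X2 a) = (t (t X2 a) (t b (t X2 a)))" by (metis d852 d20 cp ct abc)
  have d1077: "\<And>X4. X4 \<in> S \<Longrightarrow> (t a X4) = (t (t a X4) (t (t b (t a X4)) (t a X4)))" by (metis d65 d731 cp ct abc)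
  have d1133: "\<And>X4. X4 \<in> S \<Longrightarrow> (t a X4) = (t (t a X4) (t b (t (t a X4) (t a X4))))" by (metis d1077 ta cp ct abc)
  have d1134: "\<And>X4. X4 \<in> S \<Longrightarrow> (t a X4) = (t (t a X4) (t b (t a (t X4 (t a X4)))))" by (metis d1133 ta cp ct abc)
  have d1135: "\<And>X4. X4 \<in> S \<Longrightarrow> (t a X4) = (t (t a X4) (t b (t a X4)))" by (metis d1134 d20 cp ct abc)
  have d1475: "\<And>X15 X16 X17. X15 \<in> S \<Longrightarrow> X16 \<in> S \<Longrightarrow> X17 \<in> S \<Longrightarrow> (t (t X15 X16) X17) = (t (t X15 X16) (t (t X16 (t X15 X16)) X17))" by (metis ta d348 cp ct abc)
  have d1555: "\<And>X15 X16 X17. X15 \<in> S \<Longrightarrow> X16 \<in> S \<Longrightarrow> X17 \<in> S \<Longrightarrow> (t (t X15 X16) X17) = (t (t X15 X16) (t X16 (t (t X15 X16) X17)))" by (metis d1475 ta cp ct abc)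
  have d1556: "\<And>X15 X16 X17. X15 \<in> S \<Longrightarrow> X16 \<in> S \<Longrightarrow> X17 \<in> S \<Longrightarrow> (t X15 (t X16 X17)) = (t (t X15 X16) (t X16 (t X15 (t X16 X17))))" by (metis d1555 ta cp ct abc)
  have d2817: "\<And>X7. X7 \<in> S \<Longrightarrow> (t a X7) = (t (t (t a X7) b) (t (t a X7) (t a X7)))" by (metis d65 d1135 cp ct abc)
  have d2840: "\<And>X7. X7 \<in> S \<Longrightarrow> (t a X7) = (t (t (t a X7) b) (t a (t X7 (t a X7))))" by (metis d2817 ta cp ct abc)
  have d2841: "\<And>X7. X7 \<in> S \<Longrightarrow> (t a X7) = (t (t (t a X7) b) (t a X7))" by (metis d2840 d20 cp ct abc)
  have d2842: "\<And>X7. X7 \<in> S \<Longrightarrow> (t a X7) = (t (t a (t X7 b)) (t a X7))" by (metis d2841 ta cp ct abc)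
  have d3409: "\<And>X15 X16. X15 \<in> S \<Longrightarrow> X16 \<in> S \<Longrightarrow> (t X16 (t a X15)) = (t X16 (t (t a (t X15 b)) (t X16 (t a X15))))" by (metis d43 d2842 cp ct abc)
  have d3472: "\<And>X15 X16. X15 \<in> S \<Longrightarrow> X16 \<in> S \<Longrightarrow> (t X16 (t a X15)) = (t X16 (t a (t (t X15 b) (t X16 (t a X15)))))" by (metis d3409 ta cp ct abc)
  have d3473: "\<And>X15 X16. X15 \<in> S \<Longrightarrow> X16 \<in> S \<Longrightarrow> (t X16 (t a X15)) = (t X16 (t a (t X15 (t b (t X16 (t a X15))))))" by (metis d3472 ta cp ct abc)
  have d22267: "\<And>X80. X80 \<in> S \<Longrightarrow> (t X80 a) = (t (t (t X80 a) b) (t X80 (t b (t X80 (t a (t X80 a))))))" by (metis d455 d853 cp ct abc)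
  have d23896: "\<And>X80. X80 \<in> S \<Longrightarrow> (t X80 a) = (t (t (t X80 a) b) (t X80 (t b (t X80 a))))" by (metis d22267 d20 cp ct abc)
  have d23897: "\<And>X80. X80 \<in> S \<Longrightarrow> (t X80 a) = (t (t X80 (t a b)) (t X80 (t b (t X80 a))))" by (metis d23896 ta cp ct abc)
  have d92123: "\<And>X85. X85 \<in> S \<Longrightarrow> (t X85 a) = (t (t X85 a) (t (t X85 (t b (t X85 a))) (t X85 a)))" by (metis d348 d23897 cp ct abc)
  have d92585: "\<And>X85. X85 \<in> S \<Longrightarrow> (t X85 a) = (t (t X85 a) (t X85 (t (t b (t X85 a)) (t X85 a))))" by (metis d92123 ta cp ct abc)
  have d92586: "\<And>X85. X85 \<in> S \<Longrightarrow> (t X85 a) = (t (t X85 a) (t X85 (t b (t (t X85 a) (t X85 a)))))" by (metis d92585 ta cp ct abc)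
  have d92587: "\<And>X85. X85 \<in> S \<Longrightarrow> (t X85 a) = (t (t X85 a) (t X85 (t b (t X85 (t a (t X85 a))))))" by (metis d92586 ta cp ct abc)
  have d92588: "\<And>X85. X85 \<in> S \<Longrightarrow> (t X85 a) = (t (t X85 a) (t X85 (t b (t X85 a))))" by (metis d92587 d20 cp ct abc)
  have d94219: "\<And>X1. X1 \<in> S \<Longrightarrow> (t X1 a) = (t X1 (t a (t X1 (t b (t X1 a)))))" by (metis d92588 ta cp ct abc)
  have d96056: "\<And>X10. X10 \<in> S \<Longrightarrow> (t a (t X10 (t b (t X10 a)))) = (t (t a X10) (t X10 a))" by (metis d1556 d94219 cp ct abc)
  have d96132: "\<And>X142. X142 \<in> S \<Longrightarrow> (t (t a (t X142 (t b (t X142 a)))) X142) = (t (t (t a (t X142 (t b (t X142 a)))) (t X142 a)) (t X142 (t (t a (t X142 (t b (t X142 a)))) X142)))" by (metis d475 d94219 cp ct abc)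
  have d96307: "\<And>X10. X10 \<in> S \<Longrightarrow> (t a (t X10 (t b (t X10 a)))) = (t a (t X10 (t X10 a)))" by (metis d96056 ta cp ct abc)
  have d96308: "\<And>X10. X10 \<in> S \<Longrightarrow> (t a (t X10 a)) = (t a (t X10 (t b (t X10 a))))" by (metis d96307 d14 cp ct abc)
  have d96615: "\<And>X142. X142 \<in> S \<Longrightarrow> (t a (t (t X142 (t b (t X142 a))) X142)) = (t (t (t a (t X142 (t b (t X142 a)))) (t X142 a)) (t X142 (t a (t (t X142 (t b (t X142 a))) X142))))" by (metis d96132 ta cp ct abc)
  have d96616: "\<And>X142. X142 \<in> S \<Longrightarrow> (t a (t X142 (t (t b (t X142 a)) X142))) = (t (t (t a (t X142 (t b (t X142 a)))) (t X142 a)) (t X142 (t a (t X142 (t (t b (t X142 a)) X142)))))" by (metis d96615 ta cp ct abc)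
  have d96617: "\<And>X142. X142 \<in> S \<Longrightarrow> (t a (t X142 (t b (t (t X142 a) X142)))) = (t (t (t a (t X142 (t b (t X142 a)))) (t X142 a)) (t X142 (t a (t X142 (t b (t (t X142 a) X142))))))" by (metis d96616 ta cp ct abc)
  have d96618: "\<And>X142. X142 \<in> S \<Longrightarrow> (t a (t X142 (t b (t X142 (t a X142))))) = (t (t (t a (t X142 (t b (t X142 a)))) (t X142 a)) (t X142 (t a (t X142 (t b (t X142 (t a X142)))))))" by (metis d96617 ta cp ct abc)
  have d96619: "\<And>X142. X142 \<in> S \<Longrightarrow> (t a (t X142 (t b (t X142 (t a X142))))) = (t (t (t a (t X142 (t b (t X142 a)))) (t X142 a)) (t X142 (t a X142)))" by (metis d96618 d3473 cp ct abc)
  have d96620: "\<And>X142. X142 \<in> S \<Longrightarrow> (t a (t X142 (t b (t X142 (t a X142))))) = (t (t a (t (t X142 (t b (t X142 a))) (t X142 a))) (t X142 (t a X142)))" by (metis d96619 ta cp ct abc)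
  have d96621: "\<And>X142. X142 \<in> S \<Longrightarrow> (t a (t X142 (t b (t X142 (t a X142))))) = (t (t a (t X142 (t (t b (t X142 a)) (t X142 a)))) (t X142 (t a X142)))" by (metis d96620 ta cp ct abc)
  have d96622: "\<And>X142. X142 \<in> S \<Longrightarrow> (t a (t X142 (t b (t X142 (t a X142))))) = (t (t a (t X142 (t b (t (t X142 a) (t X142 a))))) (t X142 (t a X142)))" by (metis d96621 ta cp ct abc)
  have d96623: "\<And>X142. X142 \<in> S \<Longrightarrow> (t a (t X142 (t b (t X142 (t a X142))))) = (t (t a (t X142 (t b (t X142 (t a (t X142 a)))))) (t X142 (t a X142)))" by (metis d96622 ta cp ct abc)
  have d96624: "\<And>X142. X142 \<in> S \<Longrightarrow> (t a (t X142 (t b (t X142 (t a X142))))) = (t (t a (t X142 (t b (t X142 a)))) (t X142 (t a X142)))" by (metis d96623 d20 cp ct abc)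
  have d96625: "\<And>X142. X142 \<in> S \<Longrightarrow> (t a (t X142 (t b (t X142 (t a X142))))) = (t (t a (t X142 a)) (t X142 (t a X142)))" by (metis d96624 d96308 cp ct abc)
  have d96626: "\<And>X142. X142 \<in> S \<Longrightarrow> (t a X142) = (t a (t X142 (t b (t X142 (t a X142)))))" by (metis d96625 d475 cp ct abc)
  have d109643: "(t a c) \<noteq> (t a c)" by (metis d30 d96626 cp ct abc)
  show False using d109643 by (blast | metis cp ct abc)
qed

lemma Dml: assumes "a \<in> S" "b \<in> S" "c \<in> S" and h: "t (t a b) a = a" and h2: "t (t b a) b = b"
  shows "t (t (t c a) (t c b)) (t c a) = t c a"
proof -
  interpret d: rsr S p "\<lambda>x y. t y x" by (rule dual)
  have 1: "t a (t b a) = a" using h assms by (simp add: ta)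
  have 2: "t b (t a b) = b" using h2 assms by (simp add: ta)
  from d.Dmr[OF assms(1,2,3) 1 2] show ?thesis using assms by (simp add: ta ct)
qed

lemma tt: "x \<in> S \<Longrightarrow> z \<in> S \<Longrightarrow> t x (t x z) = t x z"
  using ta[of x x z] ti[of x] by simp

lemma tt2: "x \<in> S \<Longrightarrow> y \<in> S \<Longrightarrow> t x (t y (t x y)) = t x y"
  using ta[of x y "t x y"] ti[of "t x y"] ct[of x y] by simp

lemma comm_D: "x \<in> S \<Longrightarrow> y \<in> S \<Longrightarrow> t (t (t x y) (t y x)) (t x y) = t x y"
  by (simp add: ta ct tt tt2)

lemma abs_D1: assumes "x \<in> S" "y \<in> S" shows "t (t (p x (t x y)) x) (p x (t x y)) = p x (t x y)"
  and "t (t x (p x (t x y))) x = x"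
proof -
  have xy: "t x y \<in> S" using assms ct by blast
  have 1: "t (p x (t x y)) x = x" using assms xy by (simp add: dr ti ab)
  have 2: "t x (p x (t x y)) = p x (t x y)" using assms xy by (simp add: dl ti tt)
  show "t (t (p x (t x y)) x) (p x (t x y)) = p x (t x y)" using 1 2 by simp
  show "t (t x (p x (t x y))) x = x" using 1 2 by simp
qed

end

lemma fwd:
  fixes A :: "'a salg"
  assumes i: "idem_semiring A"
    and idt: "\<forall>x\<in>car A. \<forall>y\<in>car A. pl A x (tm A (tm A x y) x) = x"
  shows "malcev Rect (malcev LZplus DLat) A"
proof -
  interpret r: rsr "car A" "pl A" "tm A"
    using i idt by unfold_locales (auto simp: idem_semiring_def)
  define \<rho> where "\<rho> = {(x, y). x \<in> car A \<and> y \<in> car A \<and> tm A (tm A x y) x = x \<and> tm A (tm A y x) y = y}"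
  have e: "equiv (car A) \<rho>"
  proof (rule equivI)
    show "\<rho> \<subseteq> car A \<times> car A" by (auto simp: \<rho>_def)
    show "refl_on (car A) \<rho>" by (auto simp: refl_on_def \<rho>_def r.ti)
    show "sym \<rho>" by (auto simp: sym_def \<rho>_def)
    show "trans \<rho>"
    proof (rule transI)
      fix x y z assume "(x, y) \<in> \<rho>" "(y, z) \<in> \<rho>"
      hence m: "x \<in> car A" "y \<in> car A" "z \<in> car A" "tm A (tm A x y) x = x" "tm A (tm A y x) y = y"
        "tm A (tm A y z) y = y" "tm A (tm A z y) z = z" by (auto simp: \<rho>_def)
      show "(x, z) \<in> \<rho>" unfolding \<rho>_def
        using r.Dtrans[OF m(1,2,3,4,5,6,7)] r.Dtrans[OF m(3,2,1,7,6,5,4)] m(1,3) by simp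
    qed
  qed
  have tr: "\<And>x y z. (x, y) \<in> \<rho> \<Longrightarrow> (y, z) \<in> \<rho> \<Longrightarrow> (x, z) \<in> \<rho>"
    using e by (meson equivE transD)
  have mem: "\<And>x y. (x, y) \<in> \<rho> \<Longrightarrow> x \<in> car A \<and> y \<in> car A \<and> tm A (tm A x y) x = x \<and> tm A (tm A y x) y = y"
    by (simp add: \<rho>_def)
  have cpl: "\<And>x x' y y'. (x, x') \<in> \<rho> \<Longrightarrow> (y, y') \<in> \<rho> \<Longrightarrow> (pl A x y, pl A x' y') \<in> \<rho>"
  proof -
    fix x x' y y' assume a: "(x, x') \<in> \<rho>" "(y, y') \<in> \<rho>"
    note m1 = mem[OF a(1)] and m2 = mem[OF a(2)]
    have "(pl A x y, pl A x' y) \<in> \<rho>" unfolding \<rho>_def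
      using r.LL[of x x' y] r.LL[of x' x y] m1 m2 r.cp by simp
    moreover have "(pl A x' y, pl A x' y') \<in> \<rho>" unfolding \<rho>_def
      using r.R[of y y' x'] r.R[of y' y x'] m1 m2 r.cp by simp
    ultimately show "(pl A x y, pl A x' y') \<in> \<rho>" by (rule tr)
  qed
  have ctm: "\<And>x x' y y'. (x, x') \<in> \<rho> \<Longrightarrow> (y, y') \<in> \<rho> \<Longrightarrow> (tm A x y, tm A x' y') \<in> \<rho>"
  proof -
    fix x x' y y' assume a: "(x, x') \<in> \<rho>" "(y, y') \<in> \<rho>"
    note m1 = mem[OF a(1)] and m2 = mem[OF a(2)]
    have "(tm A x y, tm A x' y) \<in> \<rho>" unfolding \<rho>_def
      using r.Dmr[of x x' y] r.Dmr[of x' x y] m1 m2 r.ct by simp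
    moreover have "(tm A x' y, tm A x' y') \<in> \<rho>" unfolding \<rho>_def
      using r.Dml[of y y' x'] r.Dml[of y' y x'] m1 m2 r.ct by simp
    ultimately show "(tm A x y, tm A x' y') \<in> \<rho>" by (rule tr)
  qed
  have cong: "congruence A \<rho>" unfolding congruence_def using e cpl ctm by blast
  have rect: "Rect (restr A C)" if C: "C \<in> car A // \<rho>" for C
  proof -
    have sub: "C \<subseteq> car A" using in_quotient_imp_subset[OF e C] .
    have rel: "\<And>x y. x \<in> C \<Longrightarrow> y \<in> C \<Longrightarrow> (x, y) \<in> \<rho>"
      using in_quotient_imp_in_rel[OF e C] by blast
    have rf: "\<And>x. x \<in> C \<Longrightarrow> (x, x) \<in> \<rho>" using rel by blast
    have clo: "\<And>x y. x \<in> C \<Longrightarrow> y \<in> C \<Longrightarrow> pl A x y \<in> C \<and> tm A x y \<in> C"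
    proof -
      fix x y assume xy: "x \<in> C" "y \<in> C"
      have yA: "y \<in> car A" using sub xy by blast
      have "(pl A x y, pl A y y) \<in> \<rho>" by (rule cpl[OF rel[OF xy] rf[OF xy(2)]])
      hence 1: "(y, pl A x y) \<in> \<rho>" using r.pi[OF yA] e by (simp add: equiv_def sym_def)
      have "(tm A x y, tm A y y) \<in> \<rho>" by (rule ctm[OF rel[OF xy] rf[OF xy(2)]])
      hence 2: "(y, tm A x y) \<in> \<rho>" using r.ti[OF yA] e by (simp add: equiv_def sym_def)
      show "pl A x y \<in> C \<and> tm A x y \<in> C"
        using in_quotient_imp_closed[OF e C xy(2) 1] in_quotient_imp_closed[OF e C xy(2) 2] by blast
    qed
    have "idem_semiring (restr A C)" by (rule restr_idem[OF i sub]) (simp add: clo)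
    moreover have "\<forall>x\<in>C. \<forall>y\<in>C. tm A (tm A x y) x = x" using rel mem by blast
    ultimately show ?thesis by (simp add: Rect_def restr_def)
  qed
  let ?Q = "quot A \<rho>"
  have iQ: "idem_semiring ?Q" by (rule quot_idem[OF i cong])
  have cmQ: "\<forall>X\<in>car ?Q. \<forall>Y\<in>car ?Q. tm ?Q X Y = tm ?Q Y X"
    unfolding quot_ball
  proof (intro ballI)
    fix x y assume xy: "x \<in> car A" "y \<in> car A"
    have c1: "tm A x y \<in> car A" "tm A y x \<in> car A" using xy r.ct by auto
    have "(tm A x y, tm A y x) \<in> \<rho>" unfolding \<rho>_def using c1 r.comm_D[OF xy] r.comm_D[OF xy(2,1)] by simp
    hence "\<rho>``{tm A x y} = \<rho>``{tm A y x}" using equiv_class_eq[OF e] by blast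
    thus "tm ?Q (\<rho>``{x}) (\<rho>``{y}) = tm ?Q (\<rho>``{y}) (\<rho>``{x})" using xy by (simp add: quot_tm[OF cong])
  qed
  have abQ: "\<forall>X\<in>car ?Q. \<forall>Y\<in>car ?Q. pl ?Q X (tm ?Q X Y) = X"
    unfolding quot_ball
  proof (intro ballI)
    fix x y assume xy: "x \<in> car A" "y \<in> car A"
    have c1: "tm A x y \<in> car A" "pl A x (tm A x y) \<in> car A" using xy r.ct r.cp by auto
    have "(pl A x (tm A x y), x) \<in> \<rho>" unfolding \<rho>_def using c1 xy r.abs_D1[OF xy] by simp
    hence "\<rho>``{pl A x (tm A x y)} = \<rho>``{x}" using equiv_class_eq[OF e] by blast
    thus "pl ?Q (\<rho>``{x}) (tm ?Q (\<rho>``{x}) (\<rho>``{y})) = \<rho>``{x}" using xy c1 by (simp add: quot_tm[OF cong] quot_pl[OF cong])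
  qed
  have "malcev LZplus DLat ?Q" by (rule LZD[OF iQ cmQ abQ])
  thus ?thesis unfolding malcev_def using i cong rect by blast
qed

theorem theorem4p3:
  fixes A :: "'a salg"
  shows "((idem_semiring A \<and>
            (\<forall>x\<in>car A. \<forall>y\<in>car A. pl A x (tm A (tm A x y) x) = x))
          \<longleftrightarrow> malcev Rect (malcev LZplus DLat) A)
       \<and> ((idem_semiring A \<and>
            (\<forall>x\<in>car A. \<forall>y\<in>car A. pl A (tm A (tm A x y) x) x = x))
          \<longleftrightarrow> malcev Rect (malcev RZplus DLat) A)"
proof -
  have main: "\<And>B :: 'a salg. (idem_semiring B \<and>
            (\<forall>x\<in>car B. \<forall>y\<in>car B. pl B x (tm B (tm B x y) x) = x))
          \<longleftrightarrow> malcev Rect (malcev LZplus DLat) B"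
    using fwd bwd by blast
  have "(idem_semiring A \<and> (\<forall>x\<in>car A. \<forall>y\<in>car A. pl A (tm A (tm A x y) x) x = x))
      \<longleftrightarrow> (idem_semiring (flip A) \<and>
            (\<forall>x\<in>car (flip A). \<forall>y\<in>car (flip A). pl (flip A) x (tm (flip A) (tm (flip A) x y) x) = x))"
    by simp
  also have "\<dots> \<longleftrightarrow> malcev Rect (malcev RZplus DLat) A"
    using main[of "flip A"] malcev_flip_main[of A] by simp
  finally show ?thesis using main[of A] by blast
qed

end
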